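(* $(S,s)$ is the final coalgebra for $F=M\otimes-$ on $\mathbf{Met_3}^{C}$: for every coalgebra $(X,e\colon X\to M\otimes X)$ in $\mathbf{Met_3}^{C}$ there is a unique morphism $f\colon X\to S$ in $\mathbf{Met_3}^{C}$ with $s\circ f=(M\otimes f)\circ e$.
   Context: A tripointed metric space is a set with three distinct points $T,L,R$ and a metric bounded by $1$ in which $T,L,R$ have pairwise distance $1$. $\mathbf{Met_3}^{C}$: tripointed metric spaces with continuous maps preserving $T,L,R$. Let $M=\{a,b,c\}$. For a tripointed metric space $X$, $M\times X$ has metric $d((m,x),(n,y))=\tfrac12d(x,y)$ if $m=n$ and $1$ otherwise; $M\otimes X$ is the quotient metric space by the equivalence relation generated by $(b,T)\sim(a,L)$, $(a,R)\sim(c,T)$, $(c,L)\sim(b,R)$, with elements $m\otimes x$ and distinguished points $a\otimes T,b\otimes L,c\otimes R$; $F=M\otimes-$ with $(M\otimes f)(m\otimes x)=m\otimes f(x)$. A coalgebra is $(X,e\colon X\to FX)$. Let $I=\{T,L,R\}$ with the discrete metric and $!\colon I\to FI$ be $T\mapsto a\otimes T$, $L\mapsto b\otimes L$, $R\mapsto c\otimes R$; the maps $F^n!$ are isometric embeddings and $G$ is the metric union (colimit) of $I\to FI\to F^2I\to\cdots$, i.e. expressions $m_0\otimes\cdots\otimes m_{n-1}\otimes z$ ($z\in\{T,L,R\}$) modulo the induced identifications, with $g\colon M\otimes G\to G$, $g(m\otimes w)=m\otimes w$, a bijective isometry ($(G,g)$ is the initial $F$-algebra in the category of tripointed metric spaces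 with short maps). $S$ is the Cauchy completion of $G$, tripointed by $T,L,R$; the completion of $g$ yields a bijective isometry $\psi\colon M\otimes S\to S$, and $s=\psi^{-1}\colon S\to M\otimes S$. *)

theory Defs
  imports "HOL-Analysis.Analysis"
begin

datatype Mlet = A | B | C
datatype Pt = T | L | R

definition metric_on :: "'a set \<Rightarrow> ('a \<Rightarrow> 'a \<Rightarrow> real) \<Rightarrow> bool" where
  "metric_on X d \<longleftrightarrow>
     (\<forall>x\<in>X. \<forall>y\<in>X. 0 \<le> d x y \<and> d x y = d y x \<and> (d x y = 0 \<longleftrightarrow> x = y)) \<and>
     (\<forall>x\<in>X. \<forall>y\<in>X. \<forall>z\<in>X. d x z \<le> d x y + d y z)"

definition tripointed :: "'a set \<Rightarrow> ('a \<Rightarrow> 'a \<Rightarrow> real) \<Rightarrow> 'a \<Rightarrow> 'a \<Rightarrow> 'a \<Rightarrow> bool" where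
  "tripointed X d t l r \<longleftrightarrow> metric_on X d \<and> (\<forall>x\<in>X. \<forall>y\<in>X. d x y \<le> 1) \<and>
     t \<in> X \<and> l \<in> X \<and> r \<in> X \<and> t \<noteq> l \<and> t \<noteq> r \<and> l \<noteq> r \<and>
     d t l = 1 \<and> d t r = 1 \<and> d l r = 1"

definition mcont :: "'a set \<Rightarrow> ('a \<Rightarrow> 'a \<Rightarrow> real) \<Rightarrow> 'b set \<Rightarrow> ('b \<Rightarrow> 'b \<Rightarrow> real) \<Rightarrow> ('a \<Rightarrow> 'b) \<Rightarrow> bool" where
  "mcont X d Y d' f \<longleftrightarrow> f ` X \<subseteq> Y \<and>
     (\<forall>x\<in>X. \<forall>\<epsilon>>0. \<exists>\<delta>>0. \<forall>y\<in>X. d x y < \<delta> \<longrightarrow> d' (f x) (f y) < \<epsilon>)"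

definition met3c_hom :: "'a set \<Rightarrow> ('a \<Rightarrow> 'a \<Rightarrow> real) \<Rightarrow> 'a \<Rightarrow> 'a \<Rightarrow> 'a \<Rightarrow>
    'b set \<Rightarrow> ('b \<Rightarrow> 'b \<Rightarrow> real) \<Rightarrow> 'b \<Rightarrow> 'b \<Rightarrow> 'b \<Rightarrow> ('a \<Rightarrow> 'b) \<Rightarrow> bool" where
  "met3c_hom X d t l r Y d' t' l' r' f \<longleftrightarrow>
     mcont X d Y d' f \<and> f t = t' \<and> f l = l' \<and> f r = r'"

section \<open>The functor M \<otimes> -\<close>

definition tbase :: "'x \<Rightarrow> 'x \<Rightarrow> 'x \<Rightarrow> ((Mlet \<times> 'x) \<times> (Mlet \<times> 'x)) set" where
  "tbase t l r = {((B,t),(A,l)), ((A,r),(C,t)), ((C,l),(B,r))}"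

definition tequiv :: "'x set \<Rightarrow> 'x \<Rightarrow> 'x \<Rightarrow> 'x \<Rightarrow> ((Mlet \<times> 'x) \<times> (Mlet \<times> 'x)) set" where
  "tequiv X t l r = (Id_on (UNIV \<times> X) \<union> tbase t l r \<union> (tbase t l r)\<inverse>)\<^sup>+"

definition tcar :: "'x set \<Rightarrow> 'x \<Rightarrow> 'x \<Rightarrow> 'x \<Rightarrow> (Mlet \<times> 'x) set set" where
  "tcar X t l r = (UNIV \<times> X) // tequiv X t l r"

definition tel :: "'x set \<Rightarrow> 'x \<Rightarrow> 'x \<Rightarrow> 'x \<Rightarrow> Mlet \<Rightarrow> 'x \<Rightarrow> (Mlet \<times> 'x) set" where
  "tel X t l r m x = tequiv X t l r `` {(m, x)}"

definition pdist :: "('x \<Rightarrow> 'x \<Rightarrow> real) \<Rightarrow> Mlet \<times> 'x \<Rightarrow> Mlet \<times> 'x \<Rightarrow> real" where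
  "pdist d p q = (if fst p = fst q then d (snd p) (snd q) / 2 else 1)"

definition chain_ok :: "('p \<times> 'p) set \<Rightarrow> 'p set \<Rightarrow> 'p set \<Rightarrow> 'p set \<Rightarrow> ('p \<times> 'p) list \<Rightarrow> bool" where
  "chain_ok E Z P Q ch \<longleftrightarrow> ch \<noteq> [] \<and> set ch \<subseteq> Z \<times> Z \<and> fst (hd ch) \<in> P \<and> snd (last ch) \<in> Q \<and>
     (\<forall>i. Suc i < length ch \<longrightarrow> (snd (ch ! i), fst (ch ! Suc i)) \<in> E)"

definition tdist :: "'x set \<Rightarrow> ('x \<Rightarrow> 'x \<Rightarrow> real) \<Rightarrow> 'x \<Rightarrow> 'x \<Rightarrow> 'x \<Rightarrow>
    (Mlet \<times> 'x) set \<Rightarrow> (Mlet \<times> 'x) set \<Rightarrow> real" where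
  "tdist X d t l r P Q = Inf {sum_list (map (\<lambda>(p,q). pdist d p q) ch) | ch.
      chain_ok (tequiv X t l r) (UNIV \<times> X) P Q ch}"

definition tmap :: "'y set \<Rightarrow> 'y \<Rightarrow> 'y \<Rightarrow> 'y \<Rightarrow> ('x \<Rightarrow> 'y) \<Rightarrow> (Mlet \<times> 'x) set \<Rightarrow> (Mlet \<times> 'y) set" where
  "tmap Y t' l' r' f P = (let p = (SOME p. p \<in> P) in tel Y t' l' r' (fst p) (f (snd p)))"

section \<open>The initial algebra G as colimit of I \<rightarrow> FI \<rightarrow> F^2 I \<rightarrow> ...\<close>

text \<open>An element of F^n I is represented by a word m_0...m_{n-1} and z in {T,L,R}.\<close>
type_synonym word = "Mlet list \<times> Pt"

definition Wn :: "nat \<Rightarrow> word set" where "Wn n = {p. length (fst p) = n}"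
definition Tn :: "nat \<Rightarrow> word" where "Tn n = (replicate n A, T)"
definition Ln :: "nat \<Rightarrow> word" where "Ln n = (replicate n B, L)"
definition Rn :: "nat \<Rightarrow> word" where "Rn n = (replicate n C, R)"

text \<open>Pseudometric on level n (the metric of F^n I pulled back to words).\<close>
primrec wd :: "nat \<Rightarrow> word \<Rightarrow> word \<Rightarrow> real" where
  "wd 0 = (\<lambda>p q. if snd p = snd q then 0 else 1)"
| "wd (Suc n) = (\<lambda>p q. case p of (m # w, z) \<Rightarrow> (case q of (m' # w', z') \<Rightarrow>
       tdist (Wn n) (wd n) (Tn n) (Ln n) (Rn n)
         (tel (Wn n) (Tn n) (Ln n) (Rn n) m (w, z))
         (tel (Wn n) (Tn n) (Ln n) (Rn n) m' (w', z')) | _ \<Rightarrow> 0) | _ \<Rightarrow> 0)"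

text \<open>The map !: T \<mapsto> a\<otimes>T, L \<mapsto> b\<otimes>L, R \<mapsto> c\<otimes>R, and F^n ! on words.\<close>
fun bang_letter :: "Pt \<Rightarrow> Mlet" where
  "bang_letter T = A" | "bang_letter L = B" | "bang_letter R = C"

definition emb :: "word \<Rightarrow> word" where
  "emb p = (fst p @ [bang_letter (snd p)], snd p)"

definition lift_to :: "nat \<Rightarrow> word \<Rightarrow> word" where
  "lift_to N p = (emb ^^ (N - length (fst p))) p"

text \<open>Metric of the colimit G on representatives.\<close>
definition gd :: "word \<Rightarrow> word \<Rightarrow> real" where
  "gd p q = (let N = max (length (fst p)) (length (fst q)) in wd N (lift_to N p) (lift_to N q))"

section \<open>The Cauchy completion S of G\<close>

definition gcauchy :: "(nat \<Rightarrow> word) \<Rightarrow> bool" where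
  "gcauchy \<sigma> \<longleftrightarrow> (\<forall>\<epsilon>>0. \<exists>N. \<forall>m\<ge>N. \<forall>n\<ge>N. gd (\<sigma> m) (\<sigma> n) < \<epsilon>)"

definition Srel :: "((nat \<Rightarrow> word) \<times> (nat \<Rightarrow> word)) set" where
  "Srel = {(\<sigma>, \<tau>). gcauchy \<sigma> \<and> gcauchy \<tau> \<and> (\<lambda>k. gd (\<sigma> k) (\<tau> k)) \<longlonglongrightarrow> 0}"

definition Scar :: "(nat \<Rightarrow> word) set set" where
  "Scar = {\<sigma>. gcauchy \<sigma>} // Srel"

definition Scls :: "(nat \<Rightarrow> word) \<Rightarrow> (nat \<Rightarrow> word) set" where
  "Scls \<sigma> = Srel `` {\<sigma>}"

definition Sdist :: "(nat \<Rightarrow> word) set \<Rightarrow> (nat \<Rightarrow> word) set \<Rightarrow> real" where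
  "Sdist P Q = (let \<sigma> = (SOME \<sigma>. \<sigma> \<in> P); \<tau> = (SOME \<tau>. \<tau> \<in> Q) in lim (\<lambda>k. gd (\<sigma> k) (\<tau> k)))"

definition ST :: "(nat \<Rightarrow> word) set" where "ST = Scls (\<lambda>_. ([], T))"
definition SL :: "(nat \<Rightarrow> word) set" where "SL = Scls (\<lambda>_. ([], L))"
definition SR :: "(nat \<Rightarrow> word) set" where "SR = Scls (\<lambda>_. ([], R))"

text \<open>psi : M \<otimes> S \<rightarrow> S, the completion of g(m \<otimes> w) = m \<otimes> w (prefixing m).\<close>
definition psi :: "(Mlet \<times> (nat \<Rightarrow> word) set) set \<Rightarrow> (nat \<Rightarrow> word) set" where
  "psi P = (let p = (SOME p. p \<in> P); \<sigma> = (SOME \<sigma>. \<sigma> \<in> snd p)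
            in Scls (\<lambda>k. (fst p # fst (\<sigma> k), snd (\<sigma> k))))"

definition sgas :: "(nat \<Rightarrow> word) set \<Rightarrow> (Mlet \<times> (nat \<Rightarrow> word) set) set" where
  "sgas = inv_into (tcar Scar ST SL SR) psi"

end

theory Submission
  imports Defs
begin

fun cpt :: "'a \<Rightarrow> 'a \<Rightarrow> 'a \<Rightarrow> Pt \<Rightarrow> 'a" where
  "cpt t l r T = t" | "cpt t l r L = l" | "cpt t l r R = r"

fun gc :: "Mlet \<Rightarrow> Mlet \<Rightarrow> Pt" where
  "gc A B = L" | "gc B A = T" | "gc A C = R" | "gc C A = T" | "gc B C = R" | "gc C B = L"
| "gc A A = T" | "gc B B = T" | "gc C C = T"

fun th :: "Mlet \<Rightarrow> Mlet \<Rightarrow> Mlet" where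
  "th A B = C" | "th B A = C" | "th A C = B" | "th C A = B" | "th B C = A" | "th C B = A"
| "th A A = A" | "th B B = A" | "th C C = A"

definition glued :: "'a \<Rightarrow> 'a \<Rightarrow> 'a \<Rightarrow> Mlet \<times> 'a \<Rightarrow> Mlet \<times> 'a \<Rightarrow> bool" where
  "glued t l r p q \<longleftrightarrow> fst p \<noteq> fst q \<and> snd p = cpt t l r (gc (fst p) (fst q))
     \<and> snd q = cpt t l r (gc (fst q) (fst p))"

lemma cpt_eq_iff:
  assumes "t \<noteq> l" "t \<noteq> r" "l \<noteq> r"
  shows "cpt t l r P = cpt t l r Q \<longleftrightarrow> P = Q"
  using assms by (cases P; cases Q) auto

lemma glued_unique:
  assumes "t \<noteq> l" "t \<noteq> r" "l \<noteq> r" "glued t l r p q" "glued t l r s q"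
  shows "p = s"
proof -
  obtain m x where p: "p = (m,x)" by fastforce
  obtain n y where q: "q = (n,y)" by fastforce
  obtain k z where s: "s = (k,z)" by fastforce
  have "gc n m = gc n k" "m \<noteq> n" "k \<noteq> n"
    using assms(4,5) cpt_eq_iff[OF assms(1-3)] unfolding p q s glued_def by auto
  then have "m = k" by (cases m; cases n; cases k) auto
  then show ?thesis using assms(4,5) unfolding p q s glued_def by auto
qed

lemma glued_sym: "glued t l r p q \<Longrightarrow> glued t l r q p"
  unfolding glued_def by auto

lemma tequiv_char:
  assumes "t \<in> Y" "l \<in> Y" "r \<in> Y" "t \<noteq> l" "t \<noteq> r" "l \<noteq> r"
  shows "tequiv Y t l r = {(p,q). p \<in> UNIV \<times> Y \<and> q \<in> UNIV \<times> Y \<and> (p = q \<or> glued t l r p q)}"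
proof -
  let ?S = "{(p,q). p \<in> UNIV \<times> Y \<and> q \<in> UNIV \<times> Y \<and> (p = q \<or> glued t l r p q)}"
  let ?L = "Id_on (UNIV \<times> Y) \<union> tbase t l r \<union> (tbase t l r)\<inverse>"
  have key: "((m,x),(n,y)) \<in> ?L \<longleftrightarrow> ((m,x),(n,y)) \<in> ?S" for m x n y
    using assms by (cases m; cases n) (auto simp: tbase_def glued_def)
  have eq: "?L = ?S"
  proof (rule set_eqI)
    fix z :: "(Mlet \<times> 'a) \<times> Mlet \<times> 'a"
    obtain m x n y where "z = ((m,x),(n,y))" by (metis prod.collapse)
    then show "z \<in> ?L \<longleftrightarrow> z \<in> ?S" using key by simp
  qed
  have tr: "trans ?S"
  proof (rule transI)
    fix p q s
    assume a: "(p,q) \<in> ?S" "(q,s) \<in> ?S"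
    show "(p,s) \<in> ?S"
    proof (cases "p = q \<or> q = s")
      case True then show ?thesis using a by auto
    next
      case False
      have g1: "glued t l r p q" using a False by auto
      have "glued t l r q s" using a False by auto
      then have g2: "glued t l r s q" by (rule glued_sym)
      have "p = s" using glued_unique[OF assms(4-6) g1 g2] .
      then show ?thesis using a by auto
    qed
  qed
  show ?thesis unfolding tequiv_def eq using tr by (rule trancl_id)
qed

lemma tequiv_equiv:
  assumes "t \<in> Y" "l \<in> Y" "r \<in> Y" "t \<noteq> l" "t \<noteq> r" "l \<noteq> r"
  shows "equiv (UNIV \<times> Y) (tequiv Y t l r)"
proof -
  have "trans (tequiv Y t l r)" unfolding tequiv_def by (rule trans_trancl)
  moreover have "sym (tequiv Y t l r)" unfolding tequiv_char[OF assms] sym_def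
    by (auto simp: glued_def)
  moreover have "refl_on (UNIV \<times> Y) (tequiv Y t l r)" unfolding tequiv_char[OF assms] refl_on_def
    by auto
  moreover have "tequiv Y t l r \<subseteq> (UNIV \<times> Y) \<times> UNIV \<times> Y"
    unfolding tequiv_char[OF assms] by auto
  ultimately show ?thesis unfolding equiv_def by blast
qed

definition DM :: "('a \<Rightarrow> 'a \<Rightarrow> real) \<Rightarrow> 'a \<Rightarrow> 'a \<Rightarrow> 'a \<Rightarrow> Mlet \<times> 'a \<Rightarrow> Mlet \<times> 'a \<Rightarrow> real" where
  "DM d t l r p q = (if fst p = fst q then d (snd p) (snd q) / 2 else
     min ((d (snd p) (cpt t l r (gc (fst p) (fst q))) + d (cpt t l r (gc (fst q) (fst p))) (snd q)) / 2)
         ((d (snd p) (cpt t l r (gc (fst p) (th (fst p) (fst q)))) + 1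
            + d (cpt t l r (gc (fst q) (th (fst p) (fst q)))) (snd q)) / 2))"

definition tpm :: "'a set \<Rightarrow> ('a \<Rightarrow> 'a \<Rightarrow> real) \<Rightarrow> 'a \<Rightarrow> 'a \<Rightarrow> 'a \<Rightarrow> bool" where
  "tpm Y d t l r \<longleftrightarrow> t \<in> Y \<and> l \<in> Y \<and> r \<in> Y \<and> t \<noteq> l \<and> t \<noteq> r \<and> l \<noteq> r \<and>
     (\<forall>x\<in>Y. d x x = 0) \<and> (\<forall>x\<in>Y. \<forall>y\<in>Y. 0 \<le> d x y \<and> d x y \<le> 1 \<and> d x y = d y x) \<and>
     (\<forall>x\<in>Y. \<forall>y\<in>Y. \<forall>z\<in>Y. d x z \<le> d x y + d y z) \<and> d t l = 1 \<and> d t r = 1 \<and> d l r = 1"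

locale tp =
  fixes Y :: "'a set" and d t l r
  assumes tpm: "tpm Y d t l r"
begin

lemma pts: "t \<in> Y" "l \<in> Y" "r \<in> Y" "t \<noteq> l" "t \<noteq> r" "l \<noteq> r"
  using tpm unfolding tpm_def by blast+
lemma refl0: "x \<in> Y \<Longrightarrow> d x x = 0" using tpm unfolding tpm_def by blast
lemma nonneg: "x \<in> Y \<Longrightarrow> y \<in> Y \<Longrightarrow> 0 \<le> d x y" using tpm unfolding tpm_def by blast
lemma le1: "x \<in> Y \<Longrightarrow> y \<in> Y \<Longrightarrow> d x y \<le> 1" using tpm unfolding tpm_def by blast
lemma sym: "x \<in> Y \<Longrightarrow> y \<in> Y \<Longrightarrow> d x y = d y x" using tpm unfolding tpm_def by blast
lemma tri: "x \<in> Y \<Longrightarrow> y \<in> Y \<Longrightarrow> z \<in> Y \<Longrightarrow> d x z \<le> d x y + d y z"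
  using tpm unfolding tpm_def by blast
lemma corners0: "d t l = 1" "d t r = 1" "d l r = 1"
  using tpm unfolding tpm_def by blast+
lemma corners: "d t l = 1" "d t r = 1" "d l r = 1" "d l t = 1" "d r t = 1" "d r l = 1"
  using corners0 sym[OF pts(1) pts(2)] sym[OF pts(1) pts(3)] sym[OF pts(2) pts(3)] by auto

lemma cpt_in: "cpt t l r P \<in> Y" using pts by (cases P) auto

lemma cpt_dist: "P \<noteq> Q \<Longrightarrow> d (cpt t l r P) (cpt t l r Q) = 1"
  using corners by (cases P; cases Q) auto

lemma cpt_same: "d (cpt t l r P) (cpt t l r P) = 0"
  using refl0 cpt_in by auto

lemma equiv: "equiv (UNIV \<times> Y) (tequiv Y t l r)"
  by (rule tequiv_equiv[OF pts])

lemma tchar: "tequiv Y t l r = {(p,q). p \<in> UNIV \<times> Y \<and> q \<in> UNIV \<times> Y \<and> (p = q \<or> glued t l r p q)}"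
  by (rule tequiv_char[OF pts])

end

context tp begin

lemma DM_same[simp]: "DM d t l r (m,x) (m,y) = d x y / 2"
  by (simp add: DM_def)

lemma DM_diff: "m \<noteq> n \<Longrightarrow> DM d t l r (m,x) (n,y) =
     min ((d x (cpt t l r (gc m n)) + d (cpt t l r (gc n m)) y) / 2)
         ((d x (cpt t l r (gc m (th m n))) + 1 + d (cpt t l r (gc n (th m n))) y) / 2)"
  by (simp add: DM_def)

lemma DM_nonneg: "x \<in> Y \<Longrightarrow> y \<in> Y \<Longrightarrow> 0 \<le> DM d t l r (m,x) (n,y)"
  using nonneg cpt_in by (auto simp: DM_def)

lemma DM_le1: "x \<in> Y \<Longrightarrow> y \<in> Y \<Longrightarrow> DM d t l r (m,x) (n,y) \<le> 1"
proof (cases "m = n")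
  case True
  assume "x \<in> Y" "y \<in> Y" then show ?thesis using True le1[of x y] nonneg[of x y] by simp
next
  case False
  assume xy: "x \<in> Y" "y \<in> Y"
  have "d x (cpt t l r (gc m n)) \<le> 1" "d (cpt t l r (gc n m)) y \<le> 1"
    using le1 xy cpt_in by auto
  then show ?thesis using False by (simp add: DM_diff min_le_iff_disj)
qed

lemma DM_refl: "x \<in> Y \<Longrightarrow> DM d t l r (m,x) (m,x) = 0"
  using refl0 by simp

lemma DM_third: assumes "x \<in> Y" "y \<in> Y" shows "
   min (a::real) ((d x (cpt t l r (gc m (th m n))) + 1 + d (cpt t l r (gc n (th m n))) y) / 2) < 1/2
   \<Longrightarrow> a < 1/2"
  using nonneg[OF assms(1) cpt_in[of "gc m (th m n)"]] nonneg[OF cpt_in[of "gc n (th m n)"] assms(2)]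
  by argo

lemma dsyms: "x \<in> Y \<Longrightarrow> d x t = d t x" "x \<in> Y \<Longrightarrow> d x l = d l x" "x \<in> Y \<Longrightarrow> d x r = d r x"
  using sym pts by auto

lemma DM_sym: "x \<in> Y \<Longrightarrow> y \<in> Y \<Longrightarrow> DM d t l r (m,x) (n,y) = DM d t l r (n,y) (m,x)"
  using sym[of x y] dsyms[of x] dsyms[of y]
  by (cases m; cases n; simp add: DM_def; argo)

lemma DM_lip:
  assumes "x \<in> Y" "y \<in> Y" "y' \<in> Y"
  shows "DM d t l r (m,x) (n,y) \<le> DM d t l r (m,x) (n',y') + pdist d (n',y') (n,y)"
proof (cases "n = n'")
  case True
  have tr: "d c y \<le> d c y' + d y' y" if "c \<in> Y" for c using tri[OF that assms(3) assms(2)] .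
  note trs = tr[OF pts(1)] tr[OF pts(2)] tr[OF pts(3)] tr[OF assms(1)]
  show ?thesis using True trs
    by (cases m; cases n; simp add: DM_def pdist_def; argo)
next
  case False
  then show ?thesis using DM_le1[OF assms(1,2), of m n] DM_nonneg[OF assms(1,3), of m n']
    by (simp add: pdist_def)
qed

lemma DM_glue:
  assumes "x \<in> Y" "glued t l r q q'"
  shows "DM d t l r (m,x) q = DM d t l r (m,x) q'"
proof -
  obtain n y where q: "q = (n,y)" by fastforce
  obtain n' y' where q': "q' = (n',y')" by fastforce
  have g: "n \<noteq> n'" "y = cpt t l r (gc n n')" "y' = cpt t l r (gc n' n)"
    using assms(2) unfolding q q' glued_def by auto
  note c = corners refl0[OF pts(1)] refl0[OF pts(2)] refl0[OF pts(3)]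
     le1[OF assms(1) pts(1)] le1[OF assms(1) pts(2)] le1[OF assms(1) pts(3)]
     nonneg[OF assms(1) pts(1)] nonneg[OF assms(1) pts(2)] nonneg[OF assms(1) pts(3)]
  show ?thesis unfolding q q' g using g(1) c
    by (cases m; cases n; cases n'; simp add: DM_def; argo)
qed

lemma mem_tel: "q \<in> tel Y t l r m x \<longleftrightarrow> ((m,x),q) \<in> tequiv Y t l r"
  by (simp add: tel_def)

lemma self_tel: "x \<in> Y \<Longrightarrow> (m,x) \<in> tel Y t l r m x"
  unfolding mem_tel tchar by auto

lemma DM_class:
  assumes "x \<in> Y" "(q,q') \<in> tequiv Y t l r"
  shows "DM d t l r (m,x) q = DM d t l r (m,x) q'"
proof -
  have "q = q' \<or> glued t l r q q'" using assms(2) unfolding tchar by auto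
  then show ?thesis using DM_glue[OF assms(1)] by metis
qed

definition csum :: "(Mlet \<times> 'a) \<times> (Mlet \<times> 'a) \<Rightarrow> real" where
  "csum pq = pdist d (fst pq) (snd pq)"

lemma chain_bound:
  assumes "set ch \<subseteq> (UNIV \<times> Y) \<times> (UNIV \<times> Y)" "ch \<noteq> []"
    "\<forall>i. Suc i < length ch \<longrightarrow> (snd (ch!i), fst (ch ! Suc i)) \<in> tequiv Y t l r" "x \<in> Y"
  shows "DM d t l r (m,x) (snd (last ch)) \<le> DM d t l r (m,x) (fst (hd ch)) + sum_list (map csum ch)"
  using assms
proof (induction ch)
  case Nil then show ?case by simp
next
  case (Cons a ch)
  obtain n y n' y' where a: "a = ((n',y'),(n,y))" by (metis prod.collapse)
  have yy: "y \<in> Y" "y' \<in> Y" using Cons.prems(1) a by auto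
  have step: "DM d t l r (m,x) (snd a) \<le> DM d t l r (m,x) (fst a) + csum a"
    using DM_lip[OF \<open>x \<in> Y\<close> yy(1) yy(2)] a by (simp add: csum_def)
  show ?case
  proof (cases "ch = []")
    case True then show ?thesis using step by simp
  next
    case False
    have l0: "(snd a, fst (hd ch)) \<in> tequiv Y t l r"
      using Cons.prems(3) False by (cases ch) auto
    have ih: "DM d t l r (m,x) (snd (last ch)) \<le> DM d t l r (m,x) (fst (hd ch)) + sum_list (map csum ch)"
    proof (rule Cons.IH)
      show "set ch \<subseteq> (UNIV \<times> Y) \<times> UNIV \<times> Y" using Cons.prems(1) by auto
      show "ch \<noteq> []" by fact
      show "\<forall>i. Suc i < length ch \<longrightarrow> (snd (ch ! i), fst (ch ! Suc i)) \<in> tequiv Y t l r"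
      proof (intro allI impI)
        fix i assume "Suc i < length ch"
        then have "Suc (Suc i) < length (a # ch)" by simp
        then have "(snd ((a#ch) ! Suc i), fst ((a#ch) ! Suc (Suc i))) \<in> tequiv Y t l r"
          using Cons.prems(3) by blast
        then show "(snd (ch ! i), fst (ch ! Suc i)) \<in> tequiv Y t l r" by simp
      qed
      show "x \<in> Y" by fact
    qed
    have "DM d t l r (m,x) (fst (hd ch)) = DM d t l r (m,x) (snd a)"
      using DM_class[OF \<open>x \<in> Y\<close> l0] by simp
    then show ?thesis using ih step False by simp
  qed
qed

lemma chain_ok_Z: "chain_ok E Z P Q ch \<Longrightarrow> set ch \<subseteq> Z \<times> Z"
  by (simp add: chain_ok_def)

lemma all_less2: "(\<forall>i. Suc i < length [a,b] \<longrightarrow> P i) \<longleftrightarrow> P 0"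
  by (auto simp: less_Suc_eq)

lemma all_less3: "(\<forall>i. Suc i < length [a,b,c] \<longrightarrow> P i) \<longleftrightarrow> P 0 \<and> P 1"
  by (auto simp: less_Suc_eq)

lemma tdist_eq:
  assumes "x \<in> Y" "y \<in> Y"
  shows "tdist Y d t l r (tel Y t l r m x) (tel Y t l r n y) = DM d t l r (m,x) (n,y)"
proof -
  let ?P = "tel Y t l r m x" and ?Q = "tel Y t l r n y"
  let ?S = "{sum_list (map (\<lambda>(p,q). pdist d p q) ch) | ch. chain_ok (tequiv Y t l r) (UNIV \<times> Y) ?P ?Q ch}"
  have cs: "(\<lambda>(p,q). pdist d p q) = csum" by (auto simp: csum_def)
  have lower: "DM d t l r (m,x) (n,y) \<le> s" if "s \<in> ?S" for s
  proof -
    obtain ch where ch: "chain_ok (tequiv Y t l r) (UNIV \<times> Y) ?P ?Q ch"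
      and s: "s = sum_list (map csum ch)" using \<open>s \<in> ?S\<close> cs by auto
    have b: "DM d t l r (m,x) (snd (last ch)) \<le> DM d t l r (m,x) (fst (hd ch)) + sum_list (map csum ch)"
      using chain_bound[OF _ _ _ assms(1)] ch unfolding chain_ok_def by blast
    have "((m,x), fst (hd ch)) \<in> tequiv Y t l r" using ch mem_tel unfolding chain_ok_def by blast
    then have h0: "DM d t l r (m,x) (fst (hd ch)) = 0"
      using DM_class[OF assms(1)] DM_refl[OF assms(1)] by metis
    have "((n,y), snd (last ch)) \<in> tequiv Y t l r" using ch mem_tel unfolding chain_ok_def by blast
    then have h1: "DM d t l r (m,x) (snd (last ch)) = DM d t l r (m,x) (n,y)"
      using DM_class[OF assms(1)] by metis
    show ?thesis using b h0 h1 s by simp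
  qed
  have selfP: "(m,x) \<in> ?P" and selfQ: "(n,y) \<in> ?Q" using self_tel assms by auto
  have ch1: "chain_ok (tequiv Y t l r) (UNIV \<times> Y) ?P ?Q [((m,x),(n,y))]"
    using selfP selfQ assms by (simp add: chain_ok_def)
  then have ne: "?S \<noteq> {}" by blast
  have bdd: "bdd_below ?S" using lower by (auto intro!: bdd_belowI)
  have ge: "DM d t l r (m,x) (n,y) \<le> Inf ?S" by (rule cInf_greatest[OF ne]) (use lower in blast)
  have le: "Inf ?S \<le> DM d t l r (m,x) (n,y)"
  proof (cases "m = n")
    case True
    have "pdist d (m,x) (n,y) \<in> ?S" using ch1 by force
    then have "Inf ?S \<le> pdist d (m,x) (n,y)" by (rule cInf_lower[OF _ bdd])
    then show ?thesis using True by (simp add: pdist_def)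
  next
    case False
    let ?c = "cpt t l r (gc m n)" and ?c' = "cpt t l r (gc n m)"
    have gl: "((m,?c),(n,?c')) \<in> tequiv Y t l r" unfolding tchar glued_def using False cpt_in by auto
    have "chain_ok (tequiv Y t l r) (UNIV \<times> Y) ?P ?Q [((m,x),(m,?c)), ((n,?c'),(n,y))]"
      unfolding chain_ok_def all_less2 using selfP selfQ assms cpt_in gl by simp
    then have "pdist d (m,x) (m,?c) + pdist d (n,?c') (n,y) \<in> ?S" by force
    then have "Inf ?S \<le> pdist d (m,x) (m,?c) + pdist d (n,?c') (n,y)" by (rule cInf_lower[OF _ bdd])
    then have i1: "Inf ?S \<le> (d x ?c + d ?c' y) / 2" by (simp add: pdist_def add_divide_distrib)
    let ?k = "th m n"
    let ?c1 = "cpt t l r (gc m ?k)" and ?c2 = "cpt t l r (gc ?k m)"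
      and ?c3 = "cpt t l r (gc ?k n)" and ?c4 = "cpt t l r (gc n ?k)"
    have kk: "?k \<noteq> m" "?k \<noteq> n" "gc ?k m \<noteq> gc ?k n" using False by (cases m; cases n; simp)+
    have g1: "((m,?c1),(?k,?c2)) \<in> tequiv Y t l r" unfolding tchar glued_def using kk cpt_in by auto
    have g2: "((?k,?c3),(n,?c4)) \<in> tequiv Y t l r" unfolding tchar glued_def using kk cpt_in by auto
    have "chain_ok (tequiv Y t l r) (UNIV \<times> Y) ?P ?Q [((m,x),(m,?c1)), ((?k,?c2),(?k,?c3)), ((n,?c4),(n,y))]"
      unfolding chain_ok_def all_less3 using selfP selfQ assms cpt_in g1 g2 by simp
    then have "pdist d (m,x) (m,?c1) + (pdist d (?k,?c2) (?k,?c3) + pdist d (n,?c4) (n,y)) \<in> ?S" by force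
    then have "Inf ?S \<le> pdist d (m,x) (m,?c1) + (pdist d (?k,?c2) (?k,?c3) + pdist d (n,?c4) (n,y))"
      by (rule cInf_lower[OF _ bdd])
    then have i2: "Inf ?S \<le> (d x ?c1 + 1 + d ?c4 y) / 2"
      using cpt_dist[OF kk(3)] by (simp add: pdist_def add_divide_distrib)
    show ?thesis using i1 i2 False by (simp add: DM_diff)
  qed
  show ?thesis unfolding tdist_def using ge le by linarith
qed

lemma DM_tri:
  assumes "x \<in> Y" "y \<in> Y" "z \<in> Y"
  shows "DM d t l r (m,x) (k,z) \<le> DM d t l r (m,x) (n,y) + DM d t l r (n,y) (k,z)"
proof -
  let ?P = "tel Y t l r n y" and ?Q = "tel Y t l r k z"
  let ?S = "{sum_list (map (\<lambda>(p,q). pdist d p q) ch) | ch. chain_ok (tequiv Y t l r) (UNIV \<times> Y) ?P ?Q ch}"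
  have cs: "(\<lambda>(p,q). pdist d p q) = csum" by (auto simp: csum_def)
  have lower: "DM d t l r (m,x) (k,z) - DM d t l r (m,x) (n,y) \<le> s" if "s \<in> ?S" for s
  proof -
    obtain ch where ch: "chain_ok (tequiv Y t l r) (UNIV \<times> Y) ?P ?Q ch"
      and s: "s = sum_list (map csum ch)" using \<open>s \<in> ?S\<close> cs by auto
    have b: "DM d t l r (m,x) (snd (last ch)) \<le> DM d t l r (m,x) (fst (hd ch)) + sum_list (map csum ch)"
      using chain_bound[OF _ _ _ assms(1)] ch unfolding chain_ok_def by blast
    have "((n,y), fst (hd ch)) \<in> tequiv Y t l r" using ch mem_tel unfolding chain_ok_def by blast
    then have h0: "DM d t l r (m,x) (fst (hd ch)) = DM d t l r (m,x) (n,y)"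
      using DM_class[OF assms(1)] by metis
    have "((k,z), snd (last ch)) \<in> tequiv Y t l r" using ch mem_tel unfolding chain_ok_def by blast
    then have h1: "DM d t l r (m,x) (snd (last ch)) = DM d t l r (m,x) (k,z)"
      using DM_class[OF assms(1)] by metis
    show ?thesis using b h0 h1 s by simp
  qed
  have selfP: "(n,y) \<in> ?P" and selfQ: "(k,z) \<in> ?Q" using self_tel assms by auto
  have ch1: "chain_ok (tequiv Y t l r) (UNIV \<times> Y) ?P ?Q [((n,y),(k,z))]"
    using selfP selfQ assms by (simp add: chain_ok_def)
  then have ne: "?S \<noteq> {}" by blast
  have "DM d t l r (m,x) (k,z) - DM d t l r (m,x) (n,y) \<le> Inf ?S"
    by (rule cInf_greatest[OF ne]) (use lower in blast)
  also have "Inf ?S = DM d t l r (n,y) (k,z)" using tdist_eq[OF assms(2,3)] unfolding tdist_def .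
  finally show ?thesis by simp
qed

end

definition pre :: "Mlet \<Rightarrow> word \<Rightarrow> word" where "pre m p = (m # fst p, snd p)"

lemma emb_pre: "emb (pre m p) = pre m (emb p)" by (simp add: emb_def pre_def)
lemma funpow_emb_pre: "(emb ^^ k) (pre m p) = pre m ((emb ^^ k) p)"
  by (induction k) (simp_all add: emb_pre)
lemma len_emb[simp]: "length (fst (emb p)) = Suc (length (fst p))" by (simp add: emb_def)
lemma snd_emb[simp]: "snd (emb p) = snd p" by (simp add: emb_def)
lemma len_funpow: "length (fst ((emb ^^ k) p)) = length (fst p) + k"
  by (induction k) simp_all
lemma snd_funpow: "snd ((emb ^^ k) p) = snd p"
  by (induction k) simp_all
lemma len_pre[simp]: "length (fst (pre m p)) = Suc (length (fst p))" by (simp add: pre_def)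

lemma lift_len: "length (fst p) \<le> N \<Longrightarrow> length (fst (lift_to N p)) = N"
  by (simp add: lift_to_def len_funpow)
lemma lift_Wn: "length (fst p) \<le> N \<Longrightarrow> lift_to N p \<in> Wn N"
  by (simp add: Wn_def lift_len)
lemma lift_pre: "length (fst p) \<le> N \<Longrightarrow> lift_to (Suc N) (pre m p) = pre m (lift_to N p)"
  by (simp add: lift_to_def funpow_emb_pre)
lemma lift_Suc: "length (fst p) \<le> N \<Longrightarrow> lift_to (Suc N) p = emb (lift_to N p)"
  by (simp add: lift_to_def Suc_diff_le)
lemma lift_self: "lift_to (length (fst p)) p = p"
  by (simp add: lift_to_def)
lemma lift_self': "p \<in> Wn N \<Longrightarrow> lift_to N p = p"
  by (simp add: lift_to_def Wn_def)

lemma Tn_Suc: "Tn (Suc n) = pre A (Tn n)" by (simp add: Tn_def pre_def)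
lemma Ln_Suc: "Ln (Suc n) = pre B (Ln n)" by (simp add: Ln_def pre_def)
lemma Rn_Suc: "Rn (Suc n) = pre C (Rn n)" by (simp add: Rn_def pre_def)
lemma emb_Tn: "emb (Tn n) = Tn (Suc n)" by (simp add: Tn_def emb_def replicate_append_same)
lemma emb_Ln: "emb (Ln n) = Ln (Suc n)" by (simp add: Ln_def emb_def replicate_append_same)
lemma emb_Rn: "emb (Rn n) = Rn (Suc n)" by (simp add: Rn_def emb_def replicate_append_same)
lemma lift_T: "lift_to N ([],T) = Tn N"
  by (induction N) (simp_all add: lift_to_def Tn_def emb_def replicate_append_same)
lemma lift_L: "lift_to N ([],L) = Ln N"
  by (induction N) (simp_all add: lift_to_def Ln_def emb_def replicate_append_same)
lemma lift_R: "lift_to N ([],R) = Rn N"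
  by (induction N) (simp_all add: lift_to_def Rn_def emb_def replicate_append_same)
lemma corners_Wn: "Tn n \<in> Wn n" "Ln n \<in> Wn n" "Rn n \<in> Wn n"
  by (simp_all add: Tn_def Ln_def Rn_def Wn_def)
lemma corners_ne: "Tn n \<noteq> Ln n" "Tn n \<noteq> Rn n" "Ln n \<noteq> Rn n"
  by (simp_all add: Tn_def Ln_def Rn_def)

lemma Wn_Suc_E: "p \<in> Wn (Suc n) \<Longrightarrow> \<exists>m p'. p = pre m p' \<and> p' \<in> Wn n"
  by (cases p; cases "fst p") (auto simp: Wn_def pre_def)
lemma pre_Wn: "p \<in> Wn n \<Longrightarrow> pre m p \<in> Wn (Suc n)" by (simp add: Wn_def)

lemma wd_Suc_pre: "wd (Suc n) (pre m p) (pre m' q) =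
   tdist (Wn n) (wd n) (Tn n) (Ln n) (Rn n) (tel (Wn n) (Tn n) (Ln n) (Rn n) m p)
      (tel (Wn n) (Tn n) (Ln n) (Rn n) m' q)"
  by (cases p; cases q) (simp add: pre_def)

declare wd.simps(2)[simp del]

lemma cpt_h: "cpt (h t) (h l) (h r) P = h (cpt t l r P)" by (cases P) simp_all
lemma cpt_mem: "t \<in> Y \<Longrightarrow> l \<in> Y \<Longrightarrow> r \<in> Y \<Longrightarrow> cpt t l r P \<in> Y" by (cases P) simp_all

lemma DM_transfer:
  assumes "x \<in> Y" "y \<in> Y" "t \<in> Y" "l \<in> Y" "r \<in> Y" "\<forall>a\<in>Y. \<forall>b\<in>Y. d' (h a) (h b) = d a b"
  shows "DM d' (h t) (h l) (h r) (m, h x) (n, h y) = DM d t l r (m,x) (n,y)"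
  using assms cpt_mem[OF assms(3-5)] by (simp add: DM_def cpt_h)

lemma tpm_wd0: "tpm (Wn 0) (wd 0) (Tn 0) (Ln 0) (Rn 0)"
  unfolding tpm_def by (auto simp: Tn_def Ln_def Rn_def Wn_def)

lemma wd_Suc_DM:
  assumes "tpm (Wn n) (wd n) (Tn n) (Ln n) (Rn n)" "p \<in> Wn n" "q \<in> Wn n"
  shows "wd (Suc n) (pre m p) (pre m' q) = DM (wd n) (Tn n) (Ln n) (Rn n) (m,p) (m',q)"
proof -
  interpret tp "Wn n" "wd n" "Tn n" "Ln n" "Rn n" by (rule tp.intro[OF assms(1)])
  show ?thesis unfolding wd_Suc_pre using tdist_eq[OF assms(2,3)] .
qed

lemma tpm_wd: "tpm (Wn n) (wd n) (Tn n) (Ln n) (Rn n)"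
proof (induction n)
  case 0 show ?case by (rule tpm_wd0)
next
  case (Suc n)
  interpret tp "Wn n" "wd n" "Tn n" "Ln n" "Rn n" by (rule tp.intro[OF Suc.IH])
  have E: "wd (Suc n) (pre m p) (pre m' q) = DM (wd n) (Tn n) (Ln n) (Rn n) (m,p) (m',q)"
    if "p \<in> Wn n" "q \<in> Wn n" for m m' p q using wd_Suc_DM[OF Suc.IH that] .
  have c: "wd (Suc n) (Tn (Suc n)) (Ln (Suc n)) = 1" "wd (Suc n) (Tn (Suc n)) (Rn (Suc n)) = 1"
     "wd (Suc n) (Ln (Suc n)) (Rn (Suc n)) = 1"
    unfolding Tn_Suc Ln_Suc Rn_Suc using E corners_Wn corners refl0[OF corners_Wn(1)]
      refl0[OF corners_Wn(2)] refl0[OF corners_Wn(3)] by (simp_all add: DM_def)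
  show ?case unfolding tpm_def
  proof (intro conjI ballI)
    show "Tn (Suc n) \<in> Wn (Suc n)" "Ln (Suc n) \<in> Wn (Suc n)" "Rn (Suc n) \<in> Wn (Suc n)"
      by (rule corners_Wn)+
    show "Tn (Suc n) \<noteq> Ln (Suc n)" "Tn (Suc n) \<noteq> Rn (Suc n)" "Ln (Suc n) \<noteq> Rn (Suc n)"
      by (rule corners_ne)+
    show "wd (Suc n) (Tn (Suc n)) (Ln (Suc n)) = 1" "wd (Suc n) (Tn (Suc n)) (Rn (Suc n)) = 1"
     "wd (Suc n) (Ln (Suc n)) (Rn (Suc n)) = 1" by (rule c)+
  next
    fix x assume "x \<in> Wn (Suc n)"
    then obtain m p where "x = pre m p" "p \<in> Wn n" using Wn_Suc_E by blast
    then show "wd (Suc n) x x = 0" using E DM_refl by simp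
  next
    fix x y assume "x \<in> Wn (Suc n)" "y \<in> Wn (Suc n)"
    then obtain m p m' q where "x = pre m p" "p \<in> Wn n" "y = pre m' q" "q \<in> Wn n"
      using Wn_Suc_E by metis
    then show "0 \<le> wd (Suc n) x y" "wd (Suc n) x y \<le> 1" "wd (Suc n) x y = wd (Suc n) y x"
      using E DM_nonneg DM_le1 DM_sym by simp_all
  next
    fix x y z assume "x \<in> Wn (Suc n)" "y \<in> Wn (Suc n)" "z \<in> Wn (Suc n)"
    then obtain m p m' q k s where "x = pre m p" "p \<in> Wn n" "y = pre m' q" "q \<in> Wn n"
       "z = pre k s" "s \<in> Wn n"
      using Wn_Suc_E by metis
    then show "wd (Suc n) x z \<le> wd (Suc n) x y + wd (Suc n) y z"
      using E DM_tri by simp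
  qed
qed

lemma emb_pre_eq: "emb ([], z) = pre (bang_letter z) ([], z)"
  by (simp add: emb_def pre_def)

lemma wd_Suc_DM': "p \<in> Wn n \<Longrightarrow> q \<in> Wn n \<Longrightarrow>
    wd (Suc n) (pre m p) (pre m' q) = DM (wd n) (Tn n) (Ln n) (Rn n) (m,p) (m',q)"
  using wd_Suc_DM[OF tpm_wd] .

lemma emb_Wn: "p \<in> Wn n \<Longrightarrow> emb p \<in> Wn (Suc n)" by (simp add: Wn_def)

lemma emb_iso: "p \<in> Wn n \<Longrightarrow> q \<in> Wn n \<Longrightarrow> wd (Suc n) (emb p) (emb q) = wd n p q"
proof (induction n arbitrary: p q)
  case 0
  obtain z where p: "p = ([], z)" using 0 by (cases p) (auto simp: Wn_def)
  obtain z' where q: "q = ([], z')" using 0 by (cases q) (auto simp: Wn_def)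
  have w: "([], Z) \<in> Wn 0" for Z by (simp add: Wn_def)
  show ?case unfolding p q emb_pre_eq wd_Suc_DM'[OF w w]
    by (cases z; cases z') (simp_all add: DM_def Tn_def Ln_def Rn_def)
next
  case (Suc k)
  obtain m p' where p: "p = pre m p'" "p' \<in> Wn k" using Wn_Suc_E Suc.prems by blast
  obtain m' q' where q: "q = pre m' q'" "q' \<in> Wn k" using Wn_Suc_E Suc.prems by blast
  have "wd (Suc (Suc k)) (emb p) (emb q) = DM (wd (Suc k)) (Tn (Suc k)) (Ln (Suc k)) (Rn (Suc k)) (m, emb p') (m', emb q')"
    unfolding p q emb_pre using wd_Suc_DM' emb_Wn p q by blast
  also have "\<dots> = DM (wd (Suc k)) (emb (Tn k)) (emb (Ln k)) (emb (Rn k)) (m, emb p') (m', emb q')"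
    by (simp add: emb_Tn emb_Ln emb_Rn)
  also have "\<dots> = DM (wd k) (Tn k) (Ln k) (Rn k) (m, p') (m', q')"
    by (rule DM_transfer[OF p(2) q(2) corners_Wn]) (use Suc.IH in blast)
  also have "\<dots> = wd (Suc k) p q" unfolding p q using wd_Suc_DM' p q by simp
  finally show ?case .
qed

lemma wd_lift_mono:
  assumes "length (fst p) \<le> N" "length (fst q) \<le> N" "N \<le> M"
  shows "wd M (lift_to M p) (lift_to M q) = wd N (lift_to N p) (lift_to N q)"
  using assms(3)
proof (induction M rule: dec_induct)
  case base then show ?case by (rule refl)
next
  case (step M)
  have l: "length (fst p) \<le> M" "length (fst q) \<le> M" using assms step by auto
  have "wd (Suc M) (lift_to (Suc M) p) (lift_to (Suc M) q) = wd (Suc M) (emb (lift_to M p)) (emb (lift_to M q))"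
    using lift_Suc[OF l(1)] lift_Suc[OF l(2)] by (rule arg_cong2)
  also have "\<dots> = wd M (lift_to M p) (lift_to M q)"
    by (rule emb_iso[OF lift_Wn[OF l(1)] lift_Wn[OF l(2)]])
  finally show ?case using step.IH by (rule trans)
qed

lemma gd_eq:
  assumes "length (fst p) \<le> N" "length (fst q) \<le> N"
  shows "gd p q = wd N (lift_to N p) (lift_to N q)"
proof -
  have "gd p q = wd (max (length (fst p)) (length (fst q))) (lift_to (max (length (fst p)) (length (fst q))) p)
      (lift_to (max (length (fst p)) (length (fst q))) q)" unfolding gd_def Let_def by (rule refl)
  also have "\<dots> = wd N (lift_to N p) (lift_to N q)"
    by (rule wd_lift_mono[symmetric]) (use assms in auto)
  finally show ?thesis .
qed

lemma tpmN: "tp (Wn N) (wd N) (Tn N) (Ln N) (Rn N)" by (rule tp.intro[OF tpm_wd])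

lemma gdM: "gd p q = wd (max (length (fst p)) (length (fst q))) (lift_to (max (length (fst p)) (length (fst q))) p)
      (lift_to (max (length (fst p)) (length (fst q))) q)"
  and gdW: "lift_to (max (length (fst p)) (length (fst q))) p \<in> Wn (max (length (fst p)) (length (fst q)))"
     "lift_to (max (length (fst p)) (length (fst q))) q \<in> Wn (max (length (fst p)) (length (fst q)))"
  unfolding gd_def Let_def by (auto intro!: lift_Wn)

lemma gd_refl[simp]: "gd p p = 0"
  unfolding gdM[of p p] by (rule tp.refl0[OF tpmN gdW(1)])

lemma gd_sym: "gd p q = gd q p"
  unfolding gdM[of p q] gdM[of q p] max.commute[of "length (fst q)"]
  by (rule tp.sym[OF tpmN gdW(1) gdW(2)])

lemma gd_nonneg: "0 \<le> gd p q"
  unfolding gdM[of p q] by (rule tp.nonneg[OF tpmN gdW(1) gdW(2)])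

lemma gd_le1: "gd p q \<le> 1"
  unfolding gdM[of p q] by (rule tp.le1[OF tpmN gdW(1) gdW(2)])

lemma gd_tri: "gd p s \<le> gd p q + gd q s"
proof -
  define N where "N = max (length (fst p)) (max (length (fst q)) (length (fst s)))"
  have l: "length (fst p) \<le> N" "length (fst q) \<le> N" "length (fst s) \<le> N" by (auto simp: N_def)
  show ?thesis unfolding gd_eq[OF l(1) l(2)] gd_eq[OF l(1) l(3)] gd_eq[OF l(2) l(3)]
    by (rule tp.tri[OF tpmN lift_Wn[OF l(1)] lift_Wn[OF l(2)] lift_Wn[OF l(3)]])
qed

lemma gd_corners: "gd ([],T) ([],L) = 1" "gd ([],T) ([],R) = 1" "gd ([],L) ([],R) = 1"
  by (simp_all add: gd_def lift_to_def)

lemma tpG: "tpm UNIV gd ([],T) ([],L) ([],R)"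
proof -
  have a: "\<forall>x\<in>UNIV. \<forall>y\<in>UNIV. 0 \<le> gd x y \<and> gd x y \<le> 1 \<and> gd x y = gd y x"
    using gd_nonneg gd_le1 gd_sym by blast
  have b: "\<forall>x\<in>UNIV. \<forall>y\<in>UNIV. \<forall>z\<in>UNIV. gd x z \<le> gd x y + gd y z" using gd_tri by blast
  show ?thesis unfolding tpm_def using a b gd_corners by simp
qed

lemma gd_emb: "gd (emb p) p = 0"
proof -
  have "gd (emb p) p = wd (Suc (length (fst p))) (lift_to (Suc (length (fst p))) (emb p)) (lift_to (Suc (length (fst p))) p)"
    by (rule gd_eq) simp_all
  also have "\<dots> = wd (Suc (length (fst p))) (emb p) (emb p)"
    using lift_self[of "emb p"] lift_Suc[of p "length (fst p)"] lift_self[of p] by simp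
  also have "\<dots> = 0"
    by (rule tp.refl0[OF tpmN]) (simp add: Wn_def)
  finally show ?thesis .
qed

lemma gd_pre:
  "gd (pre m p) (pre n q) = DM gd ([],T) ([],L) ([],R) (m,p) (n,q)"
proof -
  define N where "N = max (length (fst p)) (length (fst q))"
  have l: "length (fst p) \<le> N" "length (fst q) \<le> N" by (auto simp: N_def)
  have "gd (pre m p) (pre n q) = wd (Suc N) (lift_to (Suc N) (pre m p)) (lift_to (Suc N) (pre n q))"
    by (rule gd_eq) (use l in simp_all)
  also have "\<dots> = wd (Suc N) (pre m (lift_to N p)) (pre n (lift_to N q))"
    using lift_pre l by simp
  also have "\<dots> = DM (wd N) (Tn N) (Ln N) (Rn N) (m, lift_to N p) (n, lift_to N q)"
    using wd_Suc_DM' lift_Wn l by blast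
  also have "\<dots> = DM (wd N) (lift_to N ([],T)) (lift_to N ([],L)) (lift_to N ([],R)) (m, lift_to N p) (n, lift_to N q)"
    by (simp add: lift_T lift_L lift_R)
  also have "\<dots> = DM gd ([],T) ([],L) ([],R) (m,p) (n,q)"
  proof (rule DM_transfer[where Y = "{p::word. length (fst p) \<le> N}"])
    show "\<forall>a\<in>{p::word. length (fst p) \<le> N}. \<forall>b\<in>{p::word. length (fst p) \<le> N}.
      wd N (lift_to N a) (lift_to N b) = gd a b"
    proof (intro ballI)
      fix a b :: word assume "a \<in> {p::word. length (fst p) \<le> N}" "b \<in> {p::word. length (fst p) \<le> N}"
      then show "wd N (lift_to N a) (lift_to N b) = gd a b" using gd_eq[of a N b] by simp
    qed
  qed (use l in simp_all)
  finally show ?thesis .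
qed

lemma gd_pre_same: "gd (pre m p) (pre m q) = gd p q / 2"
  by (simp add: gd_pre DM_def)


lemma gcauchy_const: "gcauchy (\<lambda>_. p)" by (simp add: gcauchy_def)

lemma Srel_iff: "(\<sigma>,\<tau>) \<in> Srel \<longleftrightarrow> gcauchy \<sigma> \<and> gcauchy \<tau> \<and> (\<lambda>k. gd (\<sigma> k) (\<tau> k)) \<longlonglongrightarrow> 0"
  by (simp add: Srel_def)

lemma gd_tri': fixes a b c :: word shows "gd a c \<le> gd a b + gd b c" using gd_tri[of a c b] by simp

lemma gd_tendsto_tri:
  assumes "(\<lambda>k. gd (a k) (b k)) \<longlonglongrightarrow> 0" "(\<lambda>k. gd (b k) (c k)) \<longlonglongrightarrow> 0"
  shows "(\<lambda>k. gd (a k) (c k)) \<longlonglongrightarrow> 0"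
proof (rule real_tendsto_sandwich[of "\<lambda>_. 0" _ _ "\<lambda>k. gd (a k) (b k) + gd (b k) (c k)"])
  show "\<forall>\<^sub>F n in sequentially. 0 \<le> gd (a n) (c n)" by (simp add: gd_nonneg)
  show "\<forall>\<^sub>F n in sequentially. gd (a n) (c n) \<le> gd (a n) (b n) + gd (b n) (c n)" by (simp add: gd_tri)
  show "(\<lambda>n. 0) \<longlonglongrightarrow> (0::real)" by simp
  show "(\<lambda>k. gd (a k) (b k) + gd (b k) (c k)) \<longlonglongrightarrow> 0" using tendsto_add[OF assms] by simp
qed

lemma Srel_refl: "gcauchy \<sigma> \<Longrightarrow> (\<sigma>,\<sigma>) \<in> Srel" by (simp add: Srel_def)
lemma Srel_sym: "(\<sigma>,\<tau>) \<in> Srel \<Longrightarrow> (\<tau>,\<sigma>) \<in> Srel" by (simp add: Srel_def gd_sym)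
lemma Srel_trans: "(\<sigma>,\<tau>) \<in> Srel \<Longrightarrow> (\<tau>,\<rho>) \<in> Srel \<Longrightarrow> (\<sigma>,\<rho>) \<in> Srel"
  unfolding Srel_iff using gd_tendsto_tri by blast

lemma equiv_Srel: "equiv {\<sigma>. gcauchy \<sigma>} Srel"
proof -
  have "Srel \<subseteq> {\<sigma>. gcauchy \<sigma>} \<times> {\<sigma>. gcauchy \<sigma>}" by (auto simp: Srel_def)
  moreover have "refl_on {\<sigma>. gcauchy \<sigma>} Srel" unfolding refl_on_def using Srel_refl by blast
  moreover have "sym Srel" unfolding sym_def using Srel_sym by blast
  moreover have "trans Srel" unfolding trans_def using Srel_trans by blast
  ultimately show ?thesis unfolding equiv_def by blast
qed

lemma Scls_eq_iff: "gcauchy \<sigma> \<Longrightarrow> gcauchy \<tau> \<Longrightarrow> Scls \<sigma> = Scls \<tau> \<longleftrightarrow> (\<sigma>,\<tau>) \<in> Srel"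
  unfolding Scls_def using equiv_class_eq_iff[OF equiv_Srel] by auto

lemma Scls_in: "gcauchy \<sigma> \<Longrightarrow> Scls \<sigma> \<in> Scar"
  unfolding Scls_def Scar_def by (rule quotientI) simp

lemma Scar_E: "Q \<in> Scar \<Longrightarrow> \<exists>\<sigma>. gcauchy \<sigma> \<and> Q = Scls \<sigma>"
  unfolding Scar_def Scls_def by (auto elim!: quotientE)

lemma in_Scls: "\<rho> \<in> Scls \<sigma> \<longleftrightarrow> (\<sigma>,\<rho>) \<in> Srel" by (simp add: Scls_def)

lemma Scls_some: "gcauchy \<sigma> \<Longrightarrow> (\<sigma>, SOME \<rho>. \<rho> \<in> Scls \<sigma>) \<in> Srel"
  using someI[of "\<lambda>\<rho>. \<rho> \<in> Scls \<sigma>" \<sigma>] Srel_refl in_Scls by blast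

lemma gd_conv:
  assumes "gcauchy \<sigma>" "gcauchy \<tau>"
  shows "convergent (\<lambda>k. gd (\<sigma> k) (\<tau> k))"
proof -
  have "Cauchy (\<lambda>k. gd (\<sigma> k) (\<tau> k))"
  proof (rule metric_CauchyI)
    fix e :: real assume "0 < e"
    then have e2: "e/2 > 0" by simp
    obtain M1 where M1: "\<forall>m\<ge>M1. \<forall>n\<ge>M1. gd (\<sigma> m) (\<sigma> n) < e/2"
      using assms(1) e2 unfolding gcauchy_def by blast
    obtain M2 where M2: "\<forall>m\<ge>M2. \<forall>n\<ge>M2. gd (\<tau> m) (\<tau> n) < e/2"
      using assms(2) e2 unfolding gcauchy_def by blast
    show "\<exists>M. \<forall>m\<ge>M. \<forall>n\<ge>M. dist (gd (\<sigma> m) (\<tau> m)) (gd (\<sigma> n) (\<tau> n)) < e"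
    proof (intro exI allI impI)
      fix m n assume "max M1 M2 \<le> m" "max M1 M2 \<le> n"
      then have a: "gd (\<sigma> m) (\<sigma> n) < e/2" "gd (\<tau> m) (\<tau> n) < e/2" using M1 M2 by auto
      have "gd (\<sigma> m) (\<tau> m) \<le> gd (\<sigma> m) (\<sigma> n) + gd (\<sigma> n) (\<tau> n) + gd (\<tau> n) (\<tau> m)"
        using gd_tri'[of "\<sigma> m" "\<tau> m" "\<sigma> n"] gd_tri'[of "\<sigma> n" "\<tau> m" "\<tau> n"] by linarith
      moreover have "gd (\<sigma> n) (\<tau> n) \<le> gd (\<sigma> n) (\<sigma> m) + gd (\<sigma> m) (\<tau> m) + gd (\<tau> m) (\<tau> n)"
        using gd_tri'[of "\<sigma> n" "\<tau> n" "\<sigma> m"] gd_tri'[of "\<sigma> m" "\<tau> n" "\<tau> m"] by linarith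
      ultimately show "dist (gd (\<sigma> m) (\<tau> m)) (gd (\<sigma> n) (\<tau> n)) < e"
        using a gd_sym[of "\<sigma> n" "\<sigma> m"] gd_sym[of "\<tau> n" "\<tau> m"] by (simp add: dist_real_def abs_less_iff)
    qed
  qed
  then show ?thesis by (simp add: Cauchy_convergent_iff)
qed

lemma Sdist_tendsto:
  assumes "gcauchy \<sigma>" "gcauchy \<tau>"
  shows "(\<lambda>k. gd (\<sigma> k) (\<tau> k)) \<longlonglongrightarrow> Sdist (Scls \<sigma>) (Scls \<tau>)"
proof -
  define \<sigma>' where "\<sigma>' = (SOME \<rho>. \<rho> \<in> Scls \<sigma>)"
  define \<tau>' where "\<tau>' = (SOME \<rho>. \<rho> \<in> Scls \<tau>)"
  have r: "(\<sigma>,\<sigma>') \<in> Srel" "(\<tau>,\<tau>') \<in> Srel" using Scls_some assms \<sigma>'_def \<tau>'_def by auto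
  have c: "gcauchy \<sigma>'" "gcauchy \<tau>'" using r by (auto simp: Srel_def)
  have S: "Sdist (Scls \<sigma>) (Scls \<tau>) = lim (\<lambda>k. gd (\<sigma>' k) (\<tau>' k))"
    unfolding Sdist_def Let_def \<sigma>'_def \<tau>'_def by simp
  obtain L where L: "(\<lambda>k. gd (\<sigma> k) (\<tau> k)) \<longlonglongrightarrow> L" using gd_conv[OF assms] convergent_def by blast
  have z1: "(\<lambda>k. gd (\<sigma>' k) (\<sigma> k)) \<longlonglongrightarrow> 0" "(\<lambda>k. gd (\<tau> k) (\<tau>' k)) \<longlonglongrightarrow> 0"
    using r by (auto simp: Srel_def gd_sym)
  have "(\<lambda>k. gd (\<sigma>' k) (\<tau>' k) - gd (\<sigma> k) (\<tau> k)) \<longlonglongrightarrow> 0"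
  proof (rule tendsto_rabs_zero_cancel, rule real_tendsto_sandwich[of "\<lambda>_. 0" _ _ "\<lambda>k. gd (\<sigma>' k) (\<sigma> k) + gd (\<tau> k) (\<tau>' k)"])
    show "\<forall>\<^sub>F n in sequentially. 0 \<le> \<bar>gd (\<sigma>' n) (\<tau>' n) - gd (\<sigma> n) (\<tau> n)\<bar>" by simp
    show "\<forall>\<^sub>F n in sequentially. \<bar>gd (\<sigma>' n) (\<tau>' n) - gd (\<sigma> n) (\<tau> n)\<bar> \<le> gd (\<sigma>' n) (\<sigma> n) + gd (\<tau> n) (\<tau>' n)"
    proof (rule always_eventually, rule allI)
      fix n
      have "gd (\<sigma>' n) (\<tau>' n) \<le> gd (\<sigma>' n) (\<sigma> n) + gd (\<sigma> n) (\<tau> n) + gd (\<tau> n) (\<tau>' n)"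
        using gd_tri'[of "\<sigma>' n" "\<tau>' n" "\<sigma> n"] gd_tri'[of "\<sigma> n" "\<tau>' n" "\<tau> n"] by linarith
      moreover have "gd (\<sigma> n) (\<tau> n) \<le> gd (\<sigma> n) (\<sigma>' n) + gd (\<sigma>' n) (\<tau>' n) + gd (\<tau>' n) (\<tau> n)"
        using gd_tri'[of "\<sigma> n" "\<tau> n" "\<sigma>' n"] gd_tri'[of "\<sigma>' n" "\<tau> n" "\<tau>' n"] by linarith
      ultimately show "\<bar>gd (\<sigma>' n) (\<tau>' n) - gd (\<sigma> n) (\<tau> n)\<bar> \<le> gd (\<sigma>' n) (\<sigma> n) + gd (\<tau> n) (\<tau>' n)"
        using gd_sym[of "\<sigma> n" "\<sigma>' n"] gd_sym[of "\<tau>' n" "\<tau> n"] by linarith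
    qed
    show "(\<lambda>n. 0) \<longlonglongrightarrow> (0::real)" by simp
    show "(\<lambda>k. gd (\<sigma>' k) (\<sigma> k) + gd (\<tau> k) (\<tau>' k)) \<longlonglongrightarrow> 0" using tendsto_add[OF z1] by simp
  qed
  then have "(\<lambda>k. gd (\<sigma>' k) (\<tau>' k) - gd (\<sigma> k) (\<tau> k) + gd (\<sigma> k) (\<tau> k)) \<longlonglongrightarrow> 0 + L"
    by (rule tendsto_add[OF _ L])
  then have L': "(\<lambda>k. gd (\<sigma>' k) (\<tau>' k)) \<longlonglongrightarrow> L" by simp
  have "Sdist (Scls \<sigma>) (Scls \<tau>) = L" unfolding S by (rule limI[OF L'])
  then show ?thesis using L by simp
qed

lemma Sdist_le:
  assumes "gcauchy \<sigma>" "gcauchy \<tau>" "\<forall>k\<ge>n. gd (\<sigma> k) (\<tau> k) \<le> Bd"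
  shows "Sdist (Scls \<sigma>) (Scls \<tau>) \<le> Bd"
  by (rule LIMSEQ_le_const2[OF Sdist_tendsto[OF assms(1,2)]]) (use assms(3) in blast)

lemma Sdist_nonneg: "gcauchy \<sigma> \<Longrightarrow> gcauchy \<tau> \<Longrightarrow> 0 \<le> Sdist (Scls \<sigma>) (Scls \<tau>)"
  by (rule LIMSEQ_le_const[OF Sdist_tendsto]) (auto simp: gd_nonneg)

lemma Sdist_le1: "gcauchy \<sigma> \<Longrightarrow> gcauchy \<tau> \<Longrightarrow> Sdist (Scls \<sigma>) (Scls \<tau>) \<le> 1"
  using Sdist_le[of \<sigma> \<tau> 0 1] gd_le1 by blast

lemma Sdist_zero: "gcauchy \<sigma> \<Longrightarrow> gcauchy \<tau> \<Longrightarrow> Sdist (Scls \<sigma>) (Scls \<tau>) = 0 \<Longrightarrow> Scls \<sigma> = Scls \<tau>"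
  using Sdist_tendsto[of \<sigma> \<tau>] Scls_eq_iff by (simp add: Srel_def)

definition preS :: "Mlet \<Rightarrow> (nat \<Rightarrow> word) \<Rightarrow> (nat \<Rightarrow> word)" where
  "preS m \<sigma> = (\<lambda>k. pre m (\<sigma> k))"

lemma gcauchy_pre: assumes "gcauchy \<sigma>" shows "gcauchy (preS m \<sigma>)"
  unfolding gcauchy_def preS_def gd_pre_same
proof (intro allI impI)
  fix e :: real assume "0 < e"
  then obtain N where N: "\<forall>m\<ge>N. \<forall>n\<ge>N. gd (\<sigma> m) (\<sigma> n) < e" using assms unfolding gcauchy_def by blast
  show "\<exists>N. \<forall>m\<ge>N. \<forall>n\<ge>N. gd (\<sigma> m) (\<sigma> n) / 2 < e"
  proof (intro exI allI impI)
    fix m n assume "N \<le> m" "N \<le> n"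
    then have "gd (\<sigma> m) (\<sigma> n) < e" using N by blast
    then show "gd (\<sigma> m) (\<sigma> n) / 2 < e" using gd_nonneg[of "\<sigma> m" "\<sigma> n"] by linarith
  qed
qed

lemma Srel_pre: "(\<sigma>,\<tau>) \<in> Srel \<Longrightarrow> (preS m \<sigma>, preS m \<tau>) \<in> Srel"
proof -
  assume a: "(\<sigma>,\<tau>) \<in> Srel"
  then have c: "gcauchy \<sigma>" "gcauchy \<tau>" and z: "(\<lambda>k. gd (\<sigma> k) (\<tau> k)) \<longlonglongrightarrow> 0" by (auto simp: Srel_def)
  have "(\<lambda>k. gd (\<sigma> k) (\<tau> k) / 2) \<longlonglongrightarrow> 0 / 2" by (intro tendsto_divide z tendsto_const) simp
  then have "(\<lambda>k. gd (preS m \<sigma> k) (preS m \<tau> k)) \<longlonglongrightarrow> 0" by (simp add: preS_def gd_pre_same)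
  then show ?thesis unfolding Srel_iff using gcauchy_pre c by blast
qed

lemma Sdist_pre:
  assumes "gcauchy \<sigma>" "gcauchy \<tau>"
  shows "Sdist (Scls (preS m \<sigma>)) (Scls (preS m \<tau>)) = Sdist (Scls \<sigma>) (Scls \<tau>) / 2"
proof -
  have "(\<lambda>k. gd (preS m \<sigma> k) (preS m \<tau> k)) \<longlonglongrightarrow> Sdist (Scls \<sigma>) (Scls \<tau>) / 2"
    unfolding preS_def gd_pre_same by (intro tendsto_divide Sdist_tendsto assms tendsto_const) simp
  moreover have "(\<lambda>k. gd (preS m \<sigma> k) (preS m \<tau> k)) \<longlonglongrightarrow> Sdist (Scls (preS m \<sigma>)) (Scls (preS m \<tau>))"
    by (rule Sdist_tendsto) (use assms gcauchy_pre in auto)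
  ultimately show ?thesis using LIMSEQ_unique by blast
qed


lemma preS_const: "preS m (\<lambda>_. p) = (\<lambda>_. pre m p)" by (simp add: preS_def)

lemma gd_const_ne: "P \<noteq> Q \<Longrightarrow> gd ([],P) ([],Q) = 1"
  by (simp add: gd_def lift_to_def)

lemma Scls_corner_ne: "P \<noteq> Q \<Longrightarrow> Scls (\<lambda>_. ([],P)) \<noteq> Scls (\<lambda>_. ([],Q))"
  using Scls_eq_iff[OF gcauchy_const gcauchy_const] gd_const_ne LIMSEQ_const_iff[of "1::real" 0]
  by (auto simp: Srel_def)

lemma cptS: "cpt ST SL SR P = Scls (\<lambda>_. ([],P))"
  by (cases P) (simp_all add: ST_def SL_def SR_def)

lemma ptsS: "ST \<in> Scar" "SL \<in> Scar" "SR \<in> Scar" "ST \<noteq> SL" "ST \<noteq> SR" "SL \<noteq> SR"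
  unfolding ST_def SL_def SR_def using Scls_in gcauchy_const Scls_corner_ne by auto

lemma tel_gen_E:
  assumes "P \<in> tcar Y t l r"
  shows "\<exists>m x. x \<in> Y \<and> P = tel Y t l r m x"
  using assms unfolding tcar_def tel_def by (auto elim!: quotientE)

lemma tel_in_tcar: "x \<in> Y \<Longrightarrow> tel Y t l r m x \<in> tcar Y t l r"
  unfolding tcar_def tel_def by (rule quotientI) simp

lemma tel_eq_mem:
  assumes "equiv (UNIV \<times> Y) (tequiv Y t l r)" "q \<in> tel Y t l r m x"
  shows "tel Y t l r (fst q) (snd q) = tel Y t l r m x"
  using assms unfolding tel_def by (metis equiv_class_eq equiv_class_eq_iff prod.collapse
      Image_singleton_iff)

lemma equivS: "equiv (UNIV \<times> Scar) (tequiv Scar ST SL SR)"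
  by (rule tequiv_equiv[OF ptsS])

lemma tcharS: "tequiv Scar ST SL SR = {(p,q). p \<in> UNIV \<times> Scar \<and> q \<in> UNIV \<times> Scar \<and> (p = q \<or> glued ST SL SR p q)}"
  by (rule tequiv_char[OF ptsS])

lemma cpt0: "cpt ([],T) ([],L) ([],R) P = ([],P)" by (cases P) simp_all

lemma gd_glue0: "m \<noteq> n \<Longrightarrow> gd (pre m ([], gc m n)) (pre n ([], gc n m)) = 0"
  unfolding gd_pre using gd_nonneg[of "([], gc m n)" "([], gc m (th m n))"] gd_nonneg[of "([], gc n (th m n))" "([], gc n m)"]
  by (simp add: DM_def cpt0 min_def)

lemma psi_tel:
  assumes "gcauchy \<sigma>"
  shows "psi (tel Scar ST SL SR m (Scls \<sigma>)) = Scls (preS m \<sigma>)"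
proof -
  let ?P = "tel Scar ST SL SR m (Scls \<sigma>)"
  define p where "p = (SOME p. p \<in> ?P)"
  define \<sigma>' where "\<sigma>' = (SOME \<sigma>. \<sigma> \<in> snd p)"
  have self: "(m, Scls \<sigma>) \<in> ?P" unfolding tel_def tcharS using Scls_in[OF assms] by auto
  then have pP: "p \<in> ?P" unfolding p_def by (rule someI)
  have ps: "psi ?P = Scls (preS (fst p) \<sigma>')"
    unfolding psi_def Let_def p_def \<sigma>'_def preS_def pre_def by simp
  have rel: "((m, Scls \<sigma>), p) \<in> tequiv Scar ST SL SR" using pP by (simp add: tel_def)
  then have cases: "p = (m, Scls \<sigma>) \<or> glued ST SL SR (m, Scls \<sigma>) p" unfolding tcharS by auto
  show ?thesis
  proof (cases "p = (m, Scls \<sigma>)")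
    case True
    have "(\<sigma>, \<sigma>') \<in> Srel" unfolding \<sigma>'_def True using Scls_some[OF assms] by simp
    then have r: "(preS m \<sigma>, preS m \<sigma>') \<in> Srel" by (rule Srel_pre)
    then have "Scls (preS m \<sigma>') = Scls (preS m \<sigma>)"
      using Scls_eq_iff Srel_sym by (auto simp: Srel_def)
    then show ?thesis using ps True by simp
  next
    case False
    then have g: "glued ST SL SR (m, Scls \<sigma>) p" using cases by blast
    obtain n Q where p: "p = (n, Q)" by fastforce
    have g': "m \<noteq> n" "Scls \<sigma> = Scls (\<lambda>_. ([], gc m n))" "Q = Scls (\<lambda>_. ([], gc n m))"
      using g unfolding p glued_def cptS by auto
    have r1: "((\<lambda>_. ([], gc n m)), \<sigma>') \<in> Srel"
      unfolding \<sigma>'_def p snd_conv g'(3) by (rule Scls_some[OF gcauchy_const])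
    have r2: "(\<sigma>, (\<lambda>_. ([], gc m n))) \<in> Srel" using g'(2) Scls_eq_iff[OF assms gcauchy_const] by blast
    have r3: "((\<lambda>_. pre m ([], gc m n)), (\<lambda>_. pre n ([], gc n m))) \<in> Srel"
      unfolding Srel_def using gd_glue0[OF g'(1)] gcauchy_const by simp
    have "(preS m \<sigma>, preS n \<sigma>') \<in> Srel"
      using Srel_trans[OF Srel_trans[OF Srel_pre[OF r2, of m, unfolded preS_const] r3] Srel_pre[OF r1, of n, unfolded preS_const]] .
    then have "Scls (preS n \<sigma>') = Scls (preS m \<sigma>)"
      using Scls_eq_iff Srel_sym by (auto simp: Srel_def)
    then show ?thesis using ps p by simp
  qed
qed

lemma tcarS_E:
  assumes "P \<in> tcar Scar ST SL SR"
  shows "\<exists>m \<sigma>. gcauchy \<sigma> \<and> P = tel Scar ST SL SR m (Scls \<sigma>)"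
  using tel_gen_E[OF assms] Scar_E by metis


lemma gd_pre_diff:
  assumes "m \<noteq> n"
  shows "gd (pre m p) (pre n q) = min ((gd p ([], gc m n) + gd ([], gc n m) q) / 2)
      ((gd p ([], gc m (th m n)) + 1 + gd ([], gc n (th m n)) q) / 2)"
  unfolding gd_pre using assms by (simp add: DM_def cpt0)

lemma tendsto_gd_zero_2:
  assumes "(\<lambda>k. gd (a k) (b k) / 2) \<longlonglongrightarrow> 0"
  shows "(\<lambda>k. gd (a k) (b k)) \<longlonglongrightarrow> 0"
proof -
  have "(\<lambda>k. 2 * (gd (a k) (b k) / 2)) \<longlonglongrightarrow> 2 * 0" by (intro tendsto_intros assms)
  then show ?thesis by simp
qed

lemma tel_eq_rel:
  assumes "equiv (UNIV \<times> Y) (tequiv Y t l r)" "((m,x),(n,y)) \<in> tequiv Y t l r"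
  shows "tel Y t l r m x = tel Y t l r n y"
  unfolding tel_def by (rule equiv_class_eq[OF assms])

lemma psi_inj: "inj_on psi (tcar Scar ST SL SR)"
proof (rule inj_onI)
  fix P Q assume PQ: "P \<in> tcar Scar ST SL SR" "Q \<in> tcar Scar ST SL SR" "psi P = psi Q"
  obtain m \<sigma> where \<sigma>: "gcauchy \<sigma>" "P = tel Scar ST SL SR m (Scls \<sigma>)" using tcarS_E[OF PQ(1)] by blast
  obtain n \<tau> where \<tau>: "gcauchy \<tau>" "Q = tel Scar ST SL SR n (Scls \<tau>)" using tcarS_E[OF PQ(2)] by blast
  have "Scls (preS m \<sigma>) = Scls (preS n \<tau>)" using PQ(3) psi_tel \<sigma> \<tau> by simp
  then have "(preS m \<sigma>, preS n \<tau>) \<in> Srel" using Scls_eq_iff gcauchy_pre \<sigma>(1) \<tau>(1) by blast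
  then have z: "(\<lambda>k. gd (pre m (\<sigma> k)) (pre n (\<tau> k))) \<longlonglongrightarrow> 0" by (simp add: Srel_def preS_def)
  show "P = Q"
  proof (cases "m = n")
    case True
    then have "(\<lambda>k. gd (\<sigma> k) (\<tau> k) / 2) \<longlonglongrightarrow> 0" using z by (simp add: gd_pre_same)
    then have "(\<lambda>k. gd (\<sigma> k) (\<tau> k)) \<longlonglongrightarrow> 0" by (rule tendsto_gd_zero_2)
    then have "Scls \<sigma> = Scls \<tau>" using Scls_eq_iff \<sigma>(1) \<tau>(1) by (simp add: Srel_def)
    then show ?thesis using \<sigma> \<tau> True by simp
  next
    case False
    define dir where "dir k = (gd (\<sigma> k) ([], gc m n) + gd ([], gc n m) (\<tau> k)) / 2" for k
    have ev: "\<forall>\<^sub>F k in sequentially. gd (pre m (\<sigma> k)) (pre n (\<tau> k)) < 1/2"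
      using order_tendstoD(2)[OF z, of "1/2"] by simp
    have ev2: "\<forall>\<^sub>F k in sequentially. gd (pre m (\<sigma> k)) (pre n (\<tau> k)) = dir k"
    proof (rule eventually_mono[OF ev])
      fix k assume a: "gd (pre m (\<sigma> k)) (pre n (\<tau> k)) < 1/2"
      have "0 \<le> gd (\<sigma> k) ([], gc m (th m n))" "0 \<le> gd ([], gc n (th m n)) (\<tau> k)" by (rule gd_nonneg)+
      then show "gd (pre m (\<sigma> k)) (pre n (\<tau> k)) = dir k"
        using a unfolding gd_pre_diff[OF False] dir_def by (simp add: min_def split: if_splits)
    qed
    have dz: "dir \<longlonglongrightarrow> 0" by (rule Lim_transform_eventually[OF z ev2])
    have z1: "(\<lambda>k. gd (\<sigma> k) ([], gc m n)) \<longlonglongrightarrow> 0"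
    proof (rule real_tendsto_sandwich[of "\<lambda>_. 0" _ _ "\<lambda>k. 2 * dir k"])
      show "\<forall>\<^sub>F k in sequentially. 0 \<le> gd (\<sigma> k) ([], gc m n)" by (simp add: gd_nonneg)
      show "\<forall>\<^sub>F k in sequentially. gd (\<sigma> k) ([], gc m n) \<le> 2 * dir k"
        using gd_nonneg by (simp add: dir_def)
      show "(\<lambda>_. 0) \<longlonglongrightarrow> (0::real)" by simp
      show "(\<lambda>k. 2 * dir k) \<longlonglongrightarrow> 0" using tendsto_mult_left[OF dz, of 2] by simp
    qed
    have z2: "(\<lambda>k. gd (\<tau> k) ([], gc n m)) \<longlonglongrightarrow> 0"
    proof (rule real_tendsto_sandwich[of "\<lambda>_. 0" _ _ "\<lambda>k. 2 * dir k"])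
      show "\<forall>\<^sub>F k in sequentially. 0 \<le> gd (\<tau> k) ([], gc n m)" by (simp add: gd_nonneg)
      show "\<forall>\<^sub>F k in sequentially. gd (\<tau> k) ([], gc n m) \<le> 2 * dir k"
        using gd_nonneg by (simp add: dir_def gd_sym)
      show "(\<lambda>_. 0) \<longlonglongrightarrow> (0::real)" by simp
      show "(\<lambda>k. 2 * dir k) \<longlonglongrightarrow> 0" using tendsto_mult_left[OF dz, of 2] by simp
    qed
    have s1: "Scls \<sigma> = cpt ST SL SR (gc m n)" unfolding cptS
      using Scls_eq_iff[OF \<sigma>(1) gcauchy_const] z1 \<sigma>(1) gcauchy_const by (simp add: Srel_def)
    have s2: "Scls \<tau> = cpt ST SL SR (gc n m)" unfolding cptS
      using Scls_eq_iff[OF \<tau>(1) gcauchy_const] z2 \<tau>(1) gcauchy_const by (simp add: Srel_def)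
    have i1: "cpt ST SL SR (gc m n) \<in> Scar" using s1 Scls_in[OF \<sigma>(1)] by simp
    have i2: "cpt ST SL SR (gc n m) \<in> Scar" using s2 Scls_in[OF \<tau>(1)] by simp
    have "((m, Scls \<sigma>), (n, Scls \<tau>)) \<in> tequiv Scar ST SL SR"
      unfolding tcharS glued_def using False s1 s2 i1 i2 by simp
    then show ?thesis using \<sigma>(2) \<tau>(2) tel_eq_rel[OF equivS] by simp
  qed
qed

lemma gd_emb2: "gd (emb a) (emb b) = gd a b"
proof -
  have "gd (emb a) (emb b) \<le> gd (emb a) a + gd a (emb b)" by (rule gd_tri)
  also have "\<dots> \<le> gd (emb a) a + (gd a b + gd b (emb b))" using gd_tri[of a "emb b" b] by simp
  finally have 1: "gd (emb a) (emb b) \<le> gd a b" using gd_emb[of a] gd_emb[of b] gd_sym[of b] by simp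
  have "gd a b \<le> gd a (emb a) + gd (emb a) b" by (rule gd_tri)
  also have "\<dots> \<le> gd a (emb a) + (gd (emb a) (emb b) + gd (emb b) b)" using gd_tri[of "emb a" b "emb b"] by simp
  finally have 2: "gd a b \<le> gd (emb a) (emb b)" using gd_emb[of a] gd_emb[of b] gd_sym[of a] by simp
  show ?thesis using 1 2 by simp
qed

lemma finite_Mlet: "finite (UNIV :: Mlet set)"
proof -
  have "(UNIV :: Mlet set) = {A, B, C}" by (auto intro: Mlet.exhaust)
  then show ?thesis by (metis finite.emptyI finite_insert)
qed

lemma gcauchy_sub:
  assumes "gcauchy \<sigma>" "strict_mono \<phi>"
  shows "gcauchy (\<lambda>k. \<sigma> (\<phi> k))"
  unfolding gcauchy_def
proof (intro allI impI)
  fix e :: real assume "0 < e"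
  then obtain N where N: "\<forall>m\<ge>N. \<forall>n\<ge>N. gd (\<sigma> m) (\<sigma> n) < e" using assms(1) unfolding gcauchy_def by blast
  show "\<exists>N. \<forall>m\<ge>N. \<forall>n\<ge>N. gd (\<sigma> (\<phi> m)) (\<sigma> (\<phi> n)) < e"
    using N seq_suble[OF assms(2)] le_trans by blast
qed

lemma Srel_sub:
  assumes "gcauchy \<sigma>" "strict_mono \<phi>"
  shows "(\<sigma>, (\<lambda>k. \<sigma> (\<phi> k))) \<in> Srel"
proof -
  have "(\<lambda>k. gd (\<sigma> k) (\<sigma> (\<phi> k))) \<longlonglongrightarrow> 0"
    unfolding LIMSEQ_iff
  proof (intro allI impI)
    fix e :: real assume "0 < e"
    then obtain N where N: "\<forall>m\<ge>N. \<forall>n\<ge>N. gd (\<sigma> m) (\<sigma> n) < e" using assms(1) unfolding gcauchy_def by blast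
    show "\<exists>no. \<forall>n\<ge>no. norm (gd (\<sigma> n) (\<sigma> (\<phi> n)) - 0) < e"
    proof (intro exI[of _ N] allI impI)
      fix n assume n: "N \<le> n"
      then have "N \<le> \<phi> n" using seq_suble[OF assms(2), of n] by linarith
      then have "gd (\<sigma> n) (\<sigma> (\<phi> n)) < e" using N n by blast
      then show "norm (gd (\<sigma> n) (\<sigma> (\<phi> n)) - 0) < e" using gd_nonneg[of "\<sigma> n" "\<sigma> (\<phi> n)"] by simp
    qed
  qed
  then show ?thesis using assms gcauchy_sub by (simp add: Srel_def)
qed

lemma psi_surj: "Q \<in> Scar \<Longrightarrow> Q \<in> psi ` tcar Scar ST SL SR"
proof -
  assume "Q \<in> Scar"
  then obtain \<sigma> where \<sigma>: "gcauchy \<sigma>" "Q = Scls \<sigma>" using Scar_E by blast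
  define \<sigma>2 where "\<sigma>2 k = emb (\<sigma> k)" for k
  have c2: "gcauchy \<sigma>2" using \<sigma>(1) unfolding gcauchy_def \<sigma>2_def gd_emb2 .
  have r12: "(\<sigma>, \<sigma>2) \<in> Srel" using \<sigma>(1) c2 gd_emb gd_sym by (simp add: Srel_def \<sigma>2_def)
  define h where "h k = hd (fst (\<sigma>2 k))" for k
  have ne: "fst (\<sigma>2 k) \<noteq> []" for k by (simp add: \<sigma>2_def emb_def)
  have "\<exists>m. infinite {k. h k = m}"
  proof (rule ccontr)
    assume "\<not> (\<exists>m. infinite {k. h k = m})"
    then have "finite (\<Union>m. {k. h k = m})" using finite_Mlet by auto
    moreover have "(\<Union>m. {k. h k = m}) = UNIV" by auto
    ultimately show False by simp
  qed
  then obtain m where "infinite {k. h k = m}" by blast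
  then obtain \<phi> :: "nat \<Rightarrow> nat" where \<phi>: "strict_mono \<phi>" "\<And>k. h (\<phi> k) = m"
    using infinite_enumerate by blast
  define \<tau> where "\<tau> k = (tl (fst (\<sigma>2 (\<phi> k))), snd (\<sigma>2 (\<phi> k)))" for k
  have pt: "preS m \<tau> = (\<lambda>k. \<sigma>2 (\<phi> k))"
  proof
    fix k
    have "fst (\<sigma>2 (\<phi> k)) = m # tl (fst (\<sigma>2 (\<phi> k)))" using ne[of "\<phi> k"] \<phi>(2)[of k]
      unfolding h_def by (cases "fst (\<sigma>2 (\<phi> k))") auto
    then show "preS m \<tau> k = \<sigma>2 (\<phi> k)" by (simp add: preS_def pre_def \<tau>_def prod_eq_iff)
  qed
  have c3: "gcauchy (\<lambda>k. \<sigma>2 (\<phi> k))" by (rule gcauchy_sub[OF c2 \<phi>(1)])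
  have r23: "(\<sigma>2, (\<lambda>k. \<sigma>2 (\<phi> k))) \<in> Srel" by (rule Srel_sub[OF c2 \<phi>(1)])
  have c\<tau>: "gcauchy \<tau>"
    unfolding gcauchy_def
  proof (intro allI impI)
    fix e :: real assume "0 < e"
    then have "0 < e/2" by simp
    then obtain N where N: "\<forall>i\<ge>N. \<forall>j\<ge>N. gd (\<sigma>2 (\<phi> i)) (\<sigma>2 (\<phi> j)) < e/2" using c3 unfolding gcauchy_def by blast
    have eq: "gd (\<tau> i) (\<tau> j) = 2 * gd (\<sigma>2 (\<phi> i)) (\<sigma>2 (\<phi> j))" for i j
      using gd_pre_same[of m "\<tau> i" "\<tau> j"] fun_cong[OF pt, of i] fun_cong[OF pt, of j]
      by (simp add: preS_def)
    show "\<exists>N. \<forall>i\<ge>N. \<forall>j\<ge>N. gd (\<tau> i) (\<tau> j) < e"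
    proof (intro exI[of _ N] allI impI)
      fix i j assume "N \<le> i" "N \<le> j"
      then have "gd (\<sigma>2 (\<phi> i)) (\<sigma>2 (\<phi> j)) < e/2" using N by blast
      then show "gd (\<tau> i) (\<tau> j) < e" using eq[of i j] by simp
    qed
  qed
  have "psi (tel Scar ST SL SR m (Scls \<tau>)) = Scls (preS m \<tau>)" by (rule psi_tel[OF c\<tau>])
  also have "\<dots> = Scls \<sigma>"
    unfolding pt using Scls_eq_iff[OF c3 \<sigma>(1)] Srel_sym[OF Srel_trans[OF r12 r23]] by simp
  finally have "psi (tel Scar ST SL SR m (Scls \<tau>)) = Q" using \<sigma>(2) by simp
  moreover have "tel Scar ST SL SR m (Scls \<tau>) \<in> tcar Scar ST SL SR"
    by (rule tel_in_tcar[OF Scls_in[OF c\<tau>]])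
  ultimately show ?thesis by blast
qed


lemma tripointed_tpm: "tripointed X d t l r \<Longrightarrow> tpm X d t l r"
  unfolding tripointed_def metric_on_def tpm_def by auto

lemma gd_funpow: "gd ((emb ^^ k) p) p = 0"
proof (induction k)
  case 0 then show ?case by simp
next
  case (Suc k)
  have "gd ((emb ^^ Suc k) p) p \<le> gd (emb ((emb ^^ k) p)) ((emb ^^ k) p) + gd ((emb ^^ k) p) p"
    using gd_tri by simp
  then show ?case using Suc gd_emb gd_nonneg[of "(emb ^^ Suc k) p" p] by simp
qed

lemma rep_funpow: "(replicate k (bang_letter P), P) = (emb ^^ k) ([], P)"
proof (induction k)
  case 0 show ?case by simp
next
  case (Suc k)
  have "(emb ^^ Suc k) ([],P) = emb ((emb ^^ k) ([],P))" by simp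
  also have "\<dots> = emb (replicate k (bang_letter P), P)" using Suc by simp
  also have "\<dots> = (replicate (Suc k) (bang_letter P), P)" by (simp add: emb_def replicate_append_same)
  finally show ?case by simp
qed

lemma gc_outer: "m \<noteq> bang_letter P \<Longrightarrow> gc (bang_letter P) m \<noteq> P"
  by (cases P; cases m) simp_all

lemma half_pow: "\<exists>n. 1 / 2 ^ n < (e::real)" if e0: "0 < e" for e
proof -
  obtain n where "(1/2::real) ^ n < e" using real_arch_pow_inv[of e "1/2::real"] e0 by auto
  then show ?thesis by (auto simp: power_one_over)
qed

locale coalg =
  fixes X :: "'x set" and d t l r and e :: "'x \<Rightarrow> (Mlet \<times> 'x) set"
  assumes trip: "tripointed X d t l r"
    and hom: "met3c_hom X d t l r (tcar X t l r) (tdist X d t l r)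
           (tel X t l r A t) (tel X t l r B l) (tel X t l r C r) e"
begin

sublocale tp X d t l r by (rule tp.intro[OF tripointed_tpm[OF trip]])

lemma e_in: "x \<in> X \<Longrightarrow> e x \<in> tcar X t l r"
  using hom unfolding met3c_hom_def mcont_def by blast

lemma e_cont: "x \<in> X \<Longrightarrow> 0 < \<epsilon> \<Longrightarrow> \<exists>\<delta>>0. \<forall>y\<in>X. d x y < \<delta> \<longrightarrow> tdist X d t l r (e x) (e y) < \<epsilon>"
  using hom unfolding met3c_hom_def mcont_def by blast

lemma e_corner: "e (cpt t l r P) = tel X t l r (bang_letter P) (cpt t l r P)"
  using hom unfolding met3c_hom_def by (cases P) auto

definition step :: "'x \<Rightarrow> Mlet \<times> 'x" where "step x = (SOME p. p \<in> e x)"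
definition nx :: "'x \<Rightarrow> 'x" where "nx x = snd (step x)"
definition ml :: "'x \<Rightarrow> Mlet" where "ml x = fst (step x)"

lemma step_props:
  assumes "x \<in> X"
  shows "step x \<in> e x" "nx x \<in> X" "e x = tel X t l r (ml x) (nx x)"
proof -
  obtain m y where my: "y \<in> X" "e x = tel X t l r m y" using tel_gen_E[OF e_in[OF assms]] by blast
  have "(m,y) \<in> e x" using my self_tel by simp
  then show s: "step x \<in> e x" unfolding step_def by (rule someI)
  then have "((m,y), step x) \<in> tequiv X t l r" using my mem_tel by simp
  then show "nx x \<in> X" unfolding tchar nx_def by auto
  show "e x = tel X t l r (ml x) (nx x)"
    using tel_eq_mem[OF equiv, of "step x" m y] s my by (simp add: ml_def nx_def)
qed

lemma tel_outer: "tel X t l r (bang_letter P) (cpt t l r P) = {(bang_letter P, cpt t l r P)}"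
proof -
  have "q = (bang_letter P, cpt t l r P)" if "q \<in> tel X t l r (bang_letter P) (cpt t l r P)" for q
  proof -
    have "q = (bang_letter P, cpt t l r P) \<or> glued t l r (bang_letter P, cpt t l r P) q"
      using that unfolding mem_tel tchar by auto
    moreover have "\<not> glued t l r (bang_letter P, cpt t l r P) q"
      unfolding glued_def using gc_outer[of "fst q" P] cpt_eq_iff[OF pts(4-6)] by auto
    ultimately show ?thesis by blast
  qed
  then show ?thesis using self_tel[OF cpt_in] by blast
qed

lemma step_corner: "step (cpt t l r P) = (bang_letter P, cpt t l r P)"
  unfolding step_def e_corner tel_outer by simp

lemma nx_corner: "nx (cpt t l r P) = cpt t l r P" and ml_corner: "ml (cpt t l r P) = bang_letter P"
  by (simp_all add: nx_def ml_def step_corner)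

definition zp :: "'x \<Rightarrow> Pt" where "zp x = (if x = l then L else if x = r then R else T)"

lemma zp_corner: "zp (cpt t l r P) = P"
  using pts by (cases P) (auto simp: zp_def)

primrec itin :: "'x \<Rightarrow> nat \<Rightarrow> word" where
  "itin x 0 = ([], zp x)"
| "itin x (Suc k) = pre (ml x) (itin (nx x) k)"

lemma itin_corner: "itin (cpt t l r P) k = (emb ^^ k) ([], P)"
  unfolding rep_funpow[symmetric]
  by (induction k) (simp_all add: zp_corner nx_corner ml_corner pre_def)

lemma gd_itin_corner: "gd (itin (cpt t l r P) k) ([], P) = 0"
  unfolding itin_corner by (rule gd_funpow)

lemma itin_bound: "x \<in> X \<Longrightarrow> n \<le> j \<Longrightarrow> n \<le> k \<Longrightarrow> gd (itin x j) (itin x k) \<le> 1 / 2 ^ n"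
proof (induction n arbitrary: x j k)
  case 0 then show ?case using gd_le1 by simp
next
  case (Suc n)
  obtain j' k' where jk: "j = Suc j'" "k = Suc k'" "n \<le> j'" "n \<le> k'"
    using Suc.prems by (cases j; cases k) auto
  have "gd (itin (nx x) j') (itin (nx x) k') \<le> 1 / 2 ^ n"
    using Suc.IH[OF step_props(2)[OF Suc.prems(1)] jk(3,4)] .
  then show ?case using jk by (simp add: gd_pre_same)
qed

lemma itin_cauchy: "x \<in> X \<Longrightarrow> gcauchy (itin x)"
  unfolding gcauchy_def
proof (intro allI impI)
  fix \<epsilon> :: real assume x: "x \<in> X" and "0 < \<epsilon>"
  then obtain n where n: "1 / 2 ^ n < \<epsilon>" using half_pow by blast
  show "\<exists>N. \<forall>m\<ge>N. \<forall>k\<ge>N. gd (itin x m) (itin x k) < \<epsilon>"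
    using itin_bound[OF x] n by (meson le_less_trans)
qed

definition fmap :: "'x \<Rightarrow> (nat \<Rightarrow> word) set" where "fmap x = Scls (itin x)"

lemma fmap_in: "x \<in> X \<Longrightarrow> fmap x \<in> Scar"
  unfolding fmap_def by (rule Scls_in[OF itin_cauchy])

lemma fmap_corner: "fmap (cpt t l r P) = cpt ST SL SR P"
proof -
  have c: "gcauchy (itin (cpt t l r P))" by (rule itin_cauchy[OF cpt_in])
  have "(itin (cpt t l r P), (\<lambda>_. ([], P))) \<in> Srel"
    unfolding Srel_def using c gcauchy_const gd_itin_corner by simp
  then show ?thesis unfolding fmap_def cptS using Scls_eq_iff[OF c gcauchy_const] by blast
qed

lemma fmap_step: "x \<in> X \<Longrightarrow> fmap x = Scls (preS (ml x) (itin (nx x)))"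
proof -
  assume x: "x \<in> X"
  have c: "gcauchy (itin x)" by (rule itin_cauchy[OF x])
  have "(itin x, (\<lambda>k. itin x (Suc k))) \<in> Srel" by (rule Srel_sub[OF c]) (simp add: strict_mono_def)
  moreover have "(\<lambda>k. itin x (Suc k)) = preS (ml x) (itin (nx x))" by (simp add: preS_def)
  ultimately show ?thesis unfolding fmap_def using Scls_eq_iff c gcauchy_pre itin_cauchy step_props(2)[OF x]
    by auto
qed

lemma tmap_e: "x \<in> X \<Longrightarrow> tmap Scar ST SL SR f (e x) = tel Scar ST SL SR (ml x) (f (nx x))"
  unfolding tmap_def Let_def ml_def nx_def step_def by simp

lemma fmap_eq: "x \<in> X \<Longrightarrow> sgas (fmap x) = tmap Scar ST SL SR fmap (e x)"
proof -
  assume x: "x \<in> X"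
  let ?P = "tel Scar ST SL SR (ml x) (fmap (nx x))"
  have P: "?P \<in> tcar Scar ST SL SR" by (rule tel_in_tcar[OF fmap_in[OF step_props(2)[OF x]]])
  have "psi ?P = fmap x" unfolding fmap_def[of "nx x"] psi_tel[OF itin_cauchy[OF step_props(2)[OF x]]]
    using fmap_step[OF x] by simp
  then have "sgas (fmap x) = ?P" unfolding sgas_def using inv_into_f_f[OF psi_inj P] by simp
  then show ?thesis using tmap_e[OF x] by simp
qed

end

context coalg begin

definition Bn :: "'x \<Rightarrow> nat \<Rightarrow> real" where
  "Bn x n = (if x \<in> {t,l,r} then 1 else 3) / 2 ^ n"

lemma corner_iff: "x \<in> {t,l,r} \<longleftrightarrow> (\<exists>P. x = cpt t l r P)"
proof
  assume "x \<in> {t,l,r}"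
  then show "\<exists>P. x = cpt t l r P" by (auto intro: exI[of _ T] exI[of _ L] exI[of _ R])
next
  assume "\<exists>P. x = cpt t l r P"
  then obtain P where "x = cpt t l r P" by blast
  then show "x \<in> {t,l,r}" by (cases P) auto
qed

lemma Bn_corner: "Bn (cpt t l r P) n = 1 / 2 ^ n"
  unfolding Bn_def using corner_iff by auto

lemma Bn_le: "Bn x n \<le> 3 / 2 ^ n"
  unfolding Bn_def by (simp add: divide_right_mono)

lemma cont_step:
  "\<forall>x\<in>X. \<exists>\<delta>>0. \<forall>y\<in>X. d x y < \<delta> \<longrightarrow> (\<forall>k\<ge>n. gd (itin x k) (itin y k) \<le> Bn x n)"
proof (induction n)
  case 0
  show ?case
  proof (intro ballI exI[of _ 1] conjI allI impI)
    fix x y k assume "x \<in> X"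
    have "1 \<le> Bn x 0" unfolding Bn_def by simp
    then show "gd (itin x k) (itin y k) \<le> Bn x 0" using gd_le1[of "itin x k" "itin y k"] by linarith
  qed simp
next
  case (Suc n)
  show ?case
  proof
    fix x assume x: "x \<in> X"
    have nxX: "nx x \<in> X" by (rule step_props(2)[OF x])
    obtain \<delta>1 where \<delta>1: "\<delta>1 > 0" "\<forall>y\<in>X. d (nx x) y < \<delta>1 \<longrightarrow> (\<forall>k\<ge>n. gd (itin (nx x) k) (itin y k) \<le> Bn (nx x) n)"
      using Suc.IH nxX by blast
    obtain \<delta>T where \<delta>T: "\<delta>T > 0" "\<forall>y\<in>X. d (cpt t l r T) y < \<delta>T \<longrightarrow> (\<forall>k\<ge>n. gd (itin (cpt t l r T) k) (itin y k) \<le> Bn (cpt t l r T) n)"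
      using Suc.IH cpt_in by blast
    obtain \<delta>L where \<delta>L: "\<delta>L > 0" "\<forall>y\<in>X. d (cpt t l r L) y < \<delta>L \<longrightarrow> (\<forall>k\<ge>n. gd (itin (cpt t l r L) k) (itin y k) \<le> Bn (cpt t l r L) n)"
      using Suc.IH cpt_in by blast
    obtain \<delta>R where \<delta>R: "\<delta>R > 0" "\<forall>y\<in>X. d (cpt t l r R) y < \<delta>R \<longrightarrow> (\<forall>k\<ge>n. gd (itin (cpt t l r R) k) (itin y k) \<le> Bn (cpt t l r R) n)"
      using Suc.IH cpt_in by blast
    define \<delta>c where "\<delta>c = min \<delta>T (min \<delta>L \<delta>R)"
    have \<delta>c: "\<delta>c > 0" using \<delta>T \<delta>L \<delta>R by (simp add: \<delta>c_def)
    have cornerP: "\<forall>k\<ge>n. gd (itin (cpt t l r P) k) (itin y k) \<le> 1 / 2 ^ n"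
      if "y \<in> X" "d (cpt t l r P) y < \<delta>c" for P y
    proof (cases P)
      case T then show ?thesis using \<delta>T(2) that Bn_corner[of T n] by (simp add: \<delta>c_def)
    next
      case L then show ?thesis using \<delta>L(2) that Bn_corner[of L n] by (simp add: \<delta>c_def)
    next
      case R then show ?thesis using \<delta>R(2) that Bn_corner[of R n] by (simp add: \<delta>c_def)
    qed
    define \<eta> where "\<eta> = min (min \<delta>1 \<delta>c) (1/2) / 2"
    have \<eta>: "\<eta> > 0" "2 * \<eta> \<le> \<delta>1" "2 * \<eta> \<le> \<delta>c" "2 * \<eta> \<le> 1/2"
      using \<delta>1(1) \<delta>c by (auto simp: \<eta>_def)
    obtain \<delta> where \<delta>: "\<delta> > 0" "\<forall>y\<in>X. d x y < \<delta> \<longrightarrow> tdist X d t l r (e x) (e y) < \<eta>"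
      using e_cont[OF x \<eta>(1)] by blast
    show "\<exists>\<delta>>0. \<forall>y\<in>X. d x y < \<delta> \<longrightarrow> (\<forall>k\<ge>Suc n. gd (itin x k) (itin y k) \<le> Bn x (Suc n))"
    proof (intro exI[of _ \<delta>] conjI ballI impI allI)
      show "0 < \<delta>" by (rule \<delta>(1))
      fix y k assume y: "y \<in> X" and dxy: "d x y < \<delta>" and k: "Suc n \<le> k"
      obtain k' where k': "k = Suc k'" "n \<le> k'" using k by (cases k) auto
      have nyX: "nx y \<in> X" by (rule step_props(2)[OF y])
      have DMlt: "DM d t l r (ml x, nx x) (ml y, nx y) < \<eta>"
        using \<delta>(2) y dxy step_props(3)[OF x] step_props(3)[OF y] tdist_eq[OF nxX nyX] by auto
      have ik: "itin x k = pre (ml x) (itin (nx x) k')" "itin y k = pre (ml y) (itin (nx y) k')"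
        using k' by simp_all
      show "gd (itin x k) (itin y k) \<le> Bn x (Suc n)"
      proof (cases "ml x = ml y")
        case True
        have "d (nx x) (nx y) < \<delta>1" using DMlt True \<eta> by simp
        then have G: "gd (itin (nx x) k') (itin (nx y) k') \<le> Bn (nx x) n" using \<delta>1(2) nyX k' by blast
        have eq: "gd (itin x k) (itin y k) = gd (itin (nx x) k') (itin (nx y) k') / 2"
          unfolding ik True by (rule gd_pre_same)
        show ?thesis
        proof (cases "x \<in> {t,l,r}")
          case True
          then obtain P where P: "x = cpt t l r P" using corner_iff by blast
          have "Bn (nx x) n = 1 / 2 ^ n" using P nx_corner Bn_corner by simp
          moreover have "Bn x (Suc n) = 1 / 2 ^ Suc n" using P Bn_corner by simp
          ultimately show ?thesis using eq G by simp
        next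
          case False
          then have "Bn x (Suc n) = 3 / 2 ^ Suc n" by (simp add: Bn_def)
          then show ?thesis using eq G Bn_le[of "nx x" n] by simp
        qed
      next
        case False
        let ?c = "cpt t l r (gc (ml x) (ml y))" and ?c' = "cpt t l r (gc (ml y) (ml x))"
        let ?th = "(d (nx x) (cpt t l r (gc (ml x) (th (ml x) (ml y)))) + 1 + d (cpt t l r (gc (ml y) (th (ml x) (ml y)))) (nx y)) / 2"
        have th: "?th \<ge> 1/2" using nonneg[OF nxX cpt_in] nonneg[OF cpt_in nyX] by simp
        have "min ((d (nx x) ?c + d ?c' (nx y)) / 2) ?th < \<eta>" using DMlt False by (simp add: DM_diff)
        then have dir: "(d (nx x) ?c + d ?c' (nx y)) / 2 < \<eta>" using th \<eta> by (simp add: min_def split: if_splits)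
        have n1: "0 \<le> d ?c (nx x)" by (rule nonneg[OF cpt_in nxX])
        have n2: "0 \<le> d ?c' (nx y)" by (rule nonneg[OF cpt_in nyX])
        have s1: "d (nx x) ?c = d ?c (nx x)" by (rule sym[OF nxX cpt_in])
        have d1: "d ?c (nx x) < \<delta>c" using dir n1 n2 s1 \<eta> by argo
        have d2: "d ?c' (nx y) < \<delta>c" using dir n1 n2 s1 \<eta> by argo
        show ?thesis
        proof (cases "x \<in> {t,l,r}")
          case True
          then obtain P where P: "x = cpt t l r P" using corner_iff by blast
          have ne: "gc (ml x) (ml y) \<noteq> P" using P ml_corner gc_outer False by simp
          have "d (nx x) ?c = 1" using P nx_corner cpt_dist[OF ne[symmetric]] by simp
          then have False using dir \<eta> n2 by argo
          then show ?thesis ..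
        next
          case xnc: False
          have B: "Bn x (Suc n) = 3 / 2 ^ Suc n" using xnc by (simp add: Bn_def)
          have g1: "gd (itin (nx x) k') ([], gc (ml x) (ml y)) \<le> 1 / 2 ^ n"
          proof -
            have "gd (itin (nx x) k') ([], gc (ml x) (ml y)) \<le> gd (itin (nx x) k') (itin ?c k') + gd (itin ?c k') ([], gc (ml x) (ml y))"
              by (rule gd_tri)
            also have "\<dots> = gd (itin ?c k') (itin (nx x) k')" using gd_itin_corner gd_sym by simp
            also have "\<dots> \<le> 1 / 2 ^ n" using cornerP[OF nxX d1] k' by blast
            finally show ?thesis .
          qed
          have g2: "gd ([], gc (ml y) (ml x)) (itin (nx y) k') \<le> 1 / 2 ^ n"
          proof -
            have "gd ([], gc (ml y) (ml x)) (itin (nx y) k') \<le> gd ([], gc (ml y) (ml x)) (itin ?c' k') + gd (itin ?c' k') (itin (nx y) k')"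
              by (rule gd_tri)
            also have "\<dots> = gd (itin ?c' k') (itin (nx y) k')" using gd_itin_corner gd_sym by simp
            also have "\<dots> \<le> 1 / 2 ^ n" using cornerP[OF nyX d2] k' by blast
            finally show ?thesis .
          qed
          have "gd (itin x k) (itin y k) \<le> (gd (itin (nx x) k') ([], gc (ml x) (ml y)) + gd ([], gc (ml y) (ml x)) (itin (nx y) k')) / 2"
            unfolding ik gd_pre_diff[OF False] by (rule min.cobounded1)
          also have "\<dots> \<le> 1 / 2 ^ n" using g1 g2 by simp
          also have "\<dots> \<le> 3 / 2 ^ Suc n" by (simp add: field_simps)
          finally show ?thesis using B by simp
        qed
      qed
    qed
  qed
qed

lemma fmap_mcont: "mcont X d Scar Sdist fmap"
  unfolding mcont_def
proof (intro conjI ballI allI impI)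
  show "fmap ` X \<subseteq> Scar" using fmap_in by blast
  fix x and \<epsilon> :: real assume x: "x \<in> X" and e: "0 < \<epsilon>"
  obtain n where n: "1 / 2 ^ n < \<epsilon> / 3" using half_pow[of "\<epsilon>/3"] e by auto
  obtain \<delta> where \<delta>: "\<delta> > 0" "\<forall>y\<in>X. d x y < \<delta> \<longrightarrow> (\<forall>k\<ge>n. gd (itin x k) (itin y k) \<le> Bn x n)"
    using cont_step[of n] x by blast
  show "\<exists>\<delta>>0. \<forall>y\<in>X. d x y < \<delta> \<longrightarrow> Sdist (fmap x) (fmap y) < \<epsilon>"
  proof (intro exI[of _ \<delta>] conjI ballI impI)
    show "0 < \<delta>" by (rule \<delta>(1))
    fix y assume y: "y \<in> X" "d x y < \<delta>"
    have "Sdist (fmap x) (fmap y) \<le> Bn x n"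
      unfolding fmap_def by (rule Sdist_le[OF itin_cauchy[OF x] itin_cauchy[OF y(1)]]) (use \<delta>(2) y in blast)
    also have "\<dots> \<le> 3 / 2 ^ n" by (rule Bn_le)
    also have "\<dots> < \<epsilon>" using n by (simp add: field_simps)
    finally show "Sdist (fmap x) (fmap y) < \<epsilon>" .
  qed
qed

lemma fmap_hom: "met3c_hom X d t l r Scar Sdist ST SL SR fmap"
  unfolding met3c_hom_def using fmap_mcont fmap_corner[of T] fmap_corner[of L] fmap_corner[of R] by simp

lemma uniq:
  assumes g: "met3c_hom X d t l r Scar Sdist ST SL SR g"
    and geq: "\<forall>x\<in>X. sgas (g x) = tmap Scar ST SL SR g (e x)"
  shows "\<forall>x\<in>X. g x = fmap x"
proof -
  have gin: "g x \<in> Scar" if "x \<in> X" for x using g that unfolding met3c_hom_def mcont_def by blast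
  have key: "Sdist (g x) (fmap x) = Sdist (g (nx x)) (fmap (nx x)) / 2" if x: "x \<in> X" for x
  proof -
    have nxX: "nx x \<in> X" by (rule step_props(2)[OF x])
    obtain \<tau> where \<tau>: "gcauchy \<tau>" "g (nx x) = Scls \<tau>" using Scar_E[OF gin[OF nxX]] by blast
    have "g x = psi (sgas (g x))" unfolding sgas_def
      by (rule f_inv_into_f[symmetric]) (rule psi_surj[OF gin[OF x]])
    also have "\<dots> = psi (tel Scar ST SL SR (ml x) (g (nx x)))" using geq x tmap_e by simp
    also have "\<dots> = Scls (preS (ml x) \<tau>)" using \<tau> psi_tel by simp
    finally have gx: "g x = Scls (preS (ml x) \<tau>)" .
    have fx: "fmap x = Scls (preS (ml x) (itin (nx x)))" by (rule fmap_step[OF x])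
    have "Sdist (g x) (fmap x) = Sdist (Scls (preS (ml x) \<tau>)) (Scls (preS (ml x) (itin (nx x))))"
      using gx fx by simp
    also have "\<dots> = Sdist (Scls \<tau>) (Scls (itin (nx x))) / 2" by (rule Sdist_pre[OF \<tau>(1) itin_cauchy[OF nxX]])
    also have "\<dots> = Sdist (g (nx x)) (fmap (nx x)) / 2" using \<tau>(2) by (simp add: fmap_def)
    finally show ?thesis .
  qed
  have bnd: "\<forall>x\<in>X. Sdist (g x) (fmap x) \<le> 1 / 2 ^ n" for n
  proof (induction n)
    case 0
    show ?case
    proof
      fix x assume x: "x \<in> X"
      obtain \<sigma> where \<sigma>: "gcauchy \<sigma>" "g x = Scls \<sigma>" using Scar_E[OF gin[OF x]] by blast
      show "Sdist (g x) (fmap x) \<le> 1 / 2 ^ 0"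
        unfolding \<sigma>(2) fmap_def using Sdist_le1[OF \<sigma>(1) itin_cauchy[OF x]] by simp
    qed
  next
    case (Suc n)
    show ?case
    proof
      fix x assume x: "x \<in> X"
      have "Sdist (g (nx x)) (fmap (nx x)) \<le> 1 / 2 ^ n" using Suc step_props(2)[OF x] by blast
      then show "Sdist (g x) (fmap x) \<le> 1 / 2 ^ Suc n" using key[OF x] by simp
    qed
  qed
  show ?thesis
  proof
    fix x assume x: "x \<in> X"
    obtain \<sigma> where \<sigma>: "gcauchy \<sigma>" "g x = Scls \<sigma>" using Scar_E[OF gin[OF x]] by blast
    have nn: "0 \<le> Sdist (g x) (fmap x)" unfolding \<sigma>(2) fmap_def by (rule Sdist_nonneg[OF \<sigma>(1) itin_cauchy[OF x]])
    have z: "Sdist (g x) (fmap x) = 0"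
    proof (rule ccontr)
      assume "Sdist (g x) (fmap x) \<noteq> 0"
      then have "0 < Sdist (g x) (fmap x)" using nn by simp
      then obtain n where "1 / 2 ^ n < Sdist (g x) (fmap x)" using half_pow by blast
      then show False using bnd[of n] x by fastforce
    qed
    show "g x = fmap x" unfolding \<sigma>(2) fmap_def
      by (rule Sdist_zero[OF \<sigma>(1) itin_cauchy[OF x]]) (use z \<sigma>(2) fmap_def in simp)
  qed
qed

end

theorem mainTheorem9:
  fixes X :: "'x set" and d :: "'x \<Rightarrow> 'x \<Rightarrow> real" and t l r :: 'x
    and e :: "'x \<Rightarrow> (Mlet \<times> 'x) set"
  assumes "tripointed X d t l r"
    and "met3c_hom X d t l r (tcar X t l r) (tdist X d t l r)
           (tel X t l r A t) (tel X t l r B l) (tel X t l r C r) e"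
  shows "\<exists>f. met3c_hom X d t l r Scar Sdist ST SL SR f
            \<and> (\<forall>x\<in>X. sgas (f x) = tmap Scar ST SL SR f (e x))
            \<and> (\<forall>g. met3c_hom X d t l r Scar Sdist ST SL SR g
                   \<and> (\<forall>x\<in>X. sgas (g x) = tmap Scar ST SL SR g (e x))
                   \<longrightarrow> (\<forall>x\<in>X. g x = f x))"
proof -
  interpret coalg X d t l r e using assms by (rule coalg.intro)
  show ?thesis
  proof (intro exI[of _ fmap] conjI allI impI)
    show "met3c_hom X d t l r Scar Sdist ST SL SR fmap" by (rule fmap_hom)
    show "\<forall>x\<in>X. sgas (fmap x) = tmap Scar ST SL SR fmap (e x)" using fmap_eq by blast
    fix g assume "met3c_hom X d t l r Scar Sdist ST SL SR g
                   \<and> (\<forall>x\<in>X. sgas (g x) = tmap Scar ST SL SR g (e x))"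
    then show "\<forall>x\<in>X. g x = fmap x" using uniq by blast
  qed
qed


end
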